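(* For all $N\in\mathbb{Z}$, $a\in\mathcal{A}(\mathbb{C}\mathrm{P}^\ell_q)$ and $\omega\in\Omega^k_N$, $$\bar\partial(a\omega)=a(\bar\partial\omega)+(\bar\partial a)\wedge_q\omega.$$
   Context: $0<q<1$, $\ell\ge2$. $U_q(\mathfrak{su}(\ell+1))$: Drinfeld–Jimbo Hopf $*$-algebra with generators $K_i^{\pm1},E_i,F_i=E_i^*$ ($1\le i\le\ell$), $\Delta(E_i)=E_i\otimes K_i+K_i^{-1}\otimes E_i$, $S(E_i)=-qE_i$, $S(K_i)=K_i^{-1}$, enlarged by the grouplike $\hat K=(K_1K_2^2\cdots K_\ell^\ell)^{2/(\ell+1)}$; $\mathcal{K}$ = Hopf subalgebra generated by $K_i^{\pm1},E_i,F_i$ ($i\le\ell-1$) and $\hat K^{\pm1}$. $M_{ii}=E_i$, $M_{jk}=[E_j,M_{j+1,k}]_q$ with $[a,b]_q=ab-q^{-1}ba$, $N_{i\ell}=(K_i\cdots K_\ell)\hat K^{-1}$, $X_i=N_{i\ell}M_{i\ell}^*$. $\mathcal{A}(SU_q(\ell+1))$: quantum coordinate algebra generated by matrix coefficients of the fundamental representation $\pi$ ($\pi^j_k(K_i)=\delta^j_kq^{\frac12(\delta_{i+1,j}-\delta_{i,j})}$, $\pi^j_k(E_i)=\delta^j_{i+1}\delta^i_k$), right action $a\triangleleft h=\langle h,a_{(1)}\rangle a_{(2)}$, $\mathcal{L}_ha=a\triangleleft S^{-1}(h)$. $\mathcal{A}(\mathbb{C}\mathrm{P}^\ell_q)=\{a:\mathcal{L}_ha=\epsilon(h)a\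 \forall h\in\mathcal{K}\}$. $W_k=\mathbb{C}^{\Lambda_k}$ ($\Lambda_k$ = increasing $k$-tuples in $\{1..\ell\}$) with representation $\sigma_k$: $(\sigma_k(K_j)w)_{\underline i}=q^{\frac12 j\#\underline i}w_{\underline i}$, $(\sigma_k(E_j)w)_{\underline i}=\delta_{j\#\underline i,1}w_{\underline i^{j,+}}$, $(\sigma_k(F_j)w)_{\underline i}=\delta_{j\#\underline i,-1}w_{\underline i^{j,-}}$ ($j\#\underline i=\sum_h(\delta_{i_h,j}-\delta_{i_h,j+1})$; $\underline i^{j,\pm}$ replace $j$ by $j+1$, resp. $j+1$ by $j$), $\sigma_0=\sigma_\ell=\epsilon$, $\sigma^N_k(\hat K)=q^{k-\frac{\ell}{\ell+1}N}$. $\Omega^k_N=\{\omega\in\mathcal{A}(SU_q(\ell+1))\otimes W_k:(\mathcal{L}_{h_{(1)}}\otimes\sigma^N_k(h_{(2)}))\omega=\epsilon(h)\omega\ \forall h\in\mathcal{K}\}$; $a\omega$ is componentwise left multiplication. $(\bar\partial\omega)_{\underline i}=\sum_{r=1}^{k+1}(-q)^{1-r}\omega_{\underline i\setminus i_r}\triangleleft S^{-1}(\hat KX_{i_r})$ ($\underline i\in\Lambda_{k+1}$); in particular $\bar\partial a=(a\triangleleft S^{-1}(\hat KX_i))_{i=1}^\ell$. For a $1$-form $\eta$ and $\omega\in\Omega^k_N$: $(\eta\wedge_q\omega)_{\underline i}=\sum_{r=1}^{k+1}(-q)^{1-r}\eta_{i_r}\omega_{\underline i\setminus i_r}$ for $\underline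 i\in\Lambda_{k+1}$ (zero if $k=\ell$). *)

theory Defs
  imports Complex_Main
begin

text \<open>Elements of the algebra are represented by (noncommutative) linear
combinations of words in the generators, i.e. lists of (coefficient, word).
All functionals below are matrix coefficients of representations of
U_q(su(l+1)), so they factor through the defining relations.\<close>

datatype gen = Kp nat | Km nat | Eg nat | Fg nat | Kh | Khm
  (* Kp i = K_i, Km i = K_i^{-1}, Eg i = E_i, Fg i = F_i, Kh = Khat, Khm = Khat^{-1} *)

type_synonym word = "gen list"
type_synonym uelem = "(complex \<times> word) list"
type_synonym functional = "word \<Rightarrow> complex"

definition umul :: "uelem \<Rightarrow> uelem \<Rightarrow> uelem" where
  "umul x y = [(c * d, u @ v). (c, u) \<leftarrow> x, (d, v) \<leftarrow> y]"

definition uscale :: "complex \<Rightarrow> uelem \<Rightarrow> uelem" where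
  "uscale a x = [(a * c, u). (c, u) \<leftarrow> x]"

definition ugen :: "gen \<Rightarrow> uelem" where
  "ugen g = [(1, [g])]"

definition qcomm :: "real \<Rightarrow> uelem \<Rightarrow> uelem \<Rightarrow> uelem" where
  "qcomm q a b = umul a b @ uscale (- inverse (complex_of_real q)) (umul b a)"

fun star_gen :: "gen \<Rightarrow> gen" where
  "star_gen (Eg i) = Fg i"
| "star_gen (Fg i) = Eg i"
| "star_gen g = g"

definition ustar :: "uelem \<Rightarrow> uelem" where
  "ustar x = [(cnj c, rev (map star_gen w)). (c, w) \<leftarrow> x]"

text \<open>inverse antipode on generators: S(E)=-qE, S(F)=-q^{-1}F, S(K)=K^{-1}\<close>
fun sinv_gen :: "real \<Rightarrow> gen \<Rightarrow> complex \<times> gen" where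
  "sinv_gen q (Eg i) = (- inverse (complex_of_real q), Eg i)"
| "sinv_gen q (Fg i) = (- complex_of_real q, Fg i)"
| "sinv_gen q (Kp i) = (1, Km i)"
| "sinv_gen q (Km i) = (1, Kp i)"
| "sinv_gen q Kh = (1, Khm)"
| "sinv_gen q Khm = (1, Kh)"

fun sinv_word :: "real \<Rightarrow> word \<Rightarrow> complex \<times> word" where
  "sinv_word q [] = (1, [])"
| "sinv_word q (g # w) =
     (let (c, w') = sinv_word q w; (d, g') = sinv_gen q g in (c * d, w' @ [g']))"

definition usinv :: "real \<Rightarrow> uelem \<Rightarrow> uelem" where
  "usinv q x = [(c * fst (sinv_word q w), snd (sinv_word q w)). (c, w) \<leftarrow> x]"

fun coprod_gen :: "gen \<Rightarrow> (word \<times> word) list" where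
  "coprod_gen (Eg i) = [([Eg i], [Kp i]), ([Km i], [Eg i])]"
| "coprod_gen (Fg i) = [([Fg i], [Kp i]), ([Km i], [Fg i])]"
| "coprod_gen g = [([g], [g])]"

fun coprod :: "word \<Rightarrow> (word \<times> word) list" where
  "coprod [] = [([], [])]"
| "coprod (g # w) = [(a @ u, b @ v). (a, b) \<leftarrow> coprod_gen g, (u, v) \<leftarrow> coprod w]"

fun eps_gen :: "gen \<Rightarrow> complex" where
  "eps_gen (Eg i) = 0"
| "eps_gen (Fg i) = 0"
| "eps_gen g = 1"

definition eps :: functional where
  "eps w = prod_list (map eps_gen w)"

definition ev :: "functional \<Rightarrow> uelem \<Rightarrow> complex" where
  "ev f x = (\<Sum>(c, w) \<leftarrow> x. c * f w)"

section \<open>Quantum coordinate algebra A(SU_q(l+1)) as functionals\<close>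

text \<open>fundamental representation pi, indices 1..l+1\<close>
definition khat_exp :: "nat \<Rightarrow> nat \<Rightarrow> real" where
  "khat_exp l j = (\<Sum>i = 1..l. real i *
      (((if j = i + 1 then 1 else 0) - (if j = i then 1 else 0)) / 2))"

fun pi_gen :: "real \<Rightarrow> nat \<Rightarrow> gen \<Rightarrow> nat \<Rightarrow> nat \<Rightarrow> complex" where
  "pi_gen q l (Kp i) j k = (if j = k then complex_of_real
      (q powr (((if j = i + 1 then 1 else 0) - (if j = i then 1 else 0)) / 2)) else 0)"
| "pi_gen q l (Km i) j k = (if j = k then complex_of_real
      (q powr (- (((if j = i + 1 then 1 else 0) - (if j = i then 1 else 0)) / 2))) else 0)"
| "pi_gen q l (Eg i) j k = (if j = i + 1 \<and> k = i then 1 else 0)"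
| "pi_gen q l (Fg i) j k = (if j = i \<and> k = i + 1 then 1 else 0)"
| "pi_gen q l Kh j k = (if j = k then complex_of_real
      (q powr (2 / (real l + 1) * khat_exp l j)) else 0)"
| "pi_gen q l Khm j k = (if j = k then complex_of_real
      (q powr (- (2 / (real l + 1) * khat_exp l j))) else 0)"

fun pi_word :: "real \<Rightarrow> nat \<Rightarrow> word \<Rightarrow> nat \<Rightarrow> nat \<Rightarrow> complex" where
  "pi_word q l [] j k = (if j = k then 1 else 0)"
| "pi_word q l (g # w) j k = (\<Sum>m = 1..l + 1. pi_gen q l g j m * pi_word q l w m k)"

text \<open>convolution product (dual to the coproduct)\<close>
definition conv :: "functional \<Rightarrow> functional \<Rightarrow> functional" where
  "conv f g w = (\<Sum>(u, v) \<leftarrow> coprod w. f u * g v)"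

inductive_set Aq :: "real \<Rightarrow> nat \<Rightarrow> functional set" for q l where
  unit: "eps \<in> Aq q l"
| coeff: "j \<in> {1..l + 1} \<Longrightarrow> k \<in> {1..l + 1} \<Longrightarrow> (\<lambda>w. pi_word q l w j k) \<in> Aq q l"
| add: "f \<in> Aq q l \<Longrightarrow> g \<in> Aq q l \<Longrightarrow> (\<lambda>w. f w + g w) \<in> Aq q l"
| smult: "f \<in> Aq q l \<Longrightarrow> (\<lambda>w. c * f w) \<in> Aq q l"
| mult: "f \<in> Aq q l \<Longrightarrow> g \<in> Aq q l \<Longrightarrow> conv f g \<in> Aq q l"

text \<open>right action a \<triangleleft> h = <h,a_(1)> a_(2), i.e. (a \<triangleleft> h)(x) = a(hx)\<close>
definition ract :: "functional \<Rightarrow> uelem \<Rightarrow> functional" where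
  "ract f h = (\<lambda>w. (\<Sum>(c, u) \<leftarrow> h. c * f (u @ w)))"

definition Lact :: "real \<Rightarrow> uelem \<Rightarrow> functional \<Rightarrow> functional" where
  "Lact q h f = ract f (usinv q h)"

fun isK :: "nat \<Rightarrow> gen \<Rightarrow> bool" where
  "isK l (Kp i) = (1 \<le> i \<and> i \<le> l - 1)"
| "isK l (Km i) = (1 \<le> i \<and> i \<le> l - 1)"
| "isK l (Eg i) = (1 \<le> i \<and> i \<le> l - 1)"
| "isK l (Fg i) = (1 \<le> i \<and> i \<le> l - 1)"
| "isK l Kh = True"
| "isK l Khm = True"

definition Kalg :: "nat \<Rightarrow> uelem set" where
  "Kalg l = {h. \<forall>(c, w) \<in> set h. \<forall>g \<in> set w. isK l g}"

definition CP :: "real \<Rightarrow> nat \<Rightarrow> functional set" where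
  "CP q l = {a \<in> Aq q l. \<forall>h \<in> Kalg l. Lact q h a = (\<lambda>w. ev eps h * a w)}"

text \<open>increasing k-tuples in {1..l}, represented by their underlying sets\<close>
definition Lam :: "nat \<Rightarrow> nat \<Rightarrow> nat set set" where
  "Lam l k = {I. I \<subseteq> {1..l} \<and> card I = k}"

definition jsharp :: "nat \<Rightarrow> nat set \<Rightarrow> int" where
  "jsharp j I = (if j \<in> I then 1 else 0) - (if Suc j \<in> I then 1 else 0)"

fun sigma_gen :: "real \<Rightarrow> nat \<Rightarrow> int \<Rightarrow> nat \<Rightarrow> gen \<Rightarrow> nat set \<Rightarrow> nat set \<Rightarrow> complex" where
  "sigma_gen q l N k (Kp j) I J = (if I = J then complex_of_real (q powr (real_of_int (jsharp j I) / 2)) else 0)"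
| "sigma_gen q l N k (Km j) I J = (if I = J then complex_of_real (q powr (- (real_of_int (jsharp j I) / 2))) else 0)"
| "sigma_gen q l N k (Eg j) I J = (if jsharp j I = 1 \<and> J = insert (Suc j) (I - {j}) then 1 else 0)"
| "sigma_gen q l N k (Fg j) I J = (if jsharp j I = -1 \<and> J = insert j (I - {Suc j}) then 1 else 0)"
| "sigma_gen q l N k Kh I J = (if I = J then complex_of_real
      (q powr (real k - real l * real_of_int N / (real l + 1))) else 0)"
| "sigma_gen q l N k Khm I J = (if I = J then complex_of_real
      (q powr (- (real k - real l * real_of_int N / (real l + 1)))) else 0)"

fun sigma_word :: "real \<Rightarrow> nat \<Rightarrow> int \<Rightarrow> nat \<Rightarrow> word \<Rightarrow> nat set \<Rightarrow> nat set \<Rightarrow> complex" where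
  "sigma_word q l N k [] I J = (if I = J then 1 else 0)"
| "sigma_word q l N k (g # w) I J = (\<Sum>M \<in> Lam l k. sigma_gen q l N k g I M * sigma_word q l N k w M J)"

text \<open>elements of A \<otimes> W_k are functions from index sets to A, vanishing off Lam l k\<close>
definition Omega :: "real \<Rightarrow> nat \<Rightarrow> int \<Rightarrow> nat \<Rightarrow> (nat set \<Rightarrow> functional) set" where
  "Omega q l N k = {\<omega>. (\<forall>I \<in> Lam l k. \<omega> I \<in> Aq q l) \<and> (\<forall>I. I \<notin> Lam l k \<longrightarrow> \<omega> I = (\<lambda>w. 0)) \<and>
     (\<forall>h \<in> Kalg l. \<forall>I \<in> Lam l k.
        (\<lambda>x. (\<Sum>(c, w) \<leftarrow> h. c * (\<Sum>(u, v) \<leftarrow> coprod w.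
            (\<Sum>J \<in> Lam l k. sigma_word q l N k v I J * Lact q [(1, u)] (\<omega> J) x))))
        = (\<lambda>x. ev eps h * \<omega> I x))}"

fun Mfrom :: "real \<Rightarrow> nat \<Rightarrow> nat \<Rightarrow> uelem" where
  "Mfrom q 0 j = ugen (Eg j)"
| "Mfrom q (Suc n) j = qcomm q (ugen (Eg j)) (Mfrom q n (Suc j))"

definition Mil :: "real \<Rightarrow> nat \<Rightarrow> nat \<Rightarrow> uelem" where
  "Mil q l i = Mfrom q (l - i) i"

definition Nop :: "nat \<Rightarrow> nat \<Rightarrow> uelem" where
  "Nop l i = [(1, map Kp [i..<l + 1] @ [Khm])]"

definition Xop :: "real \<Rightarrow> nat \<Rightarrow> nat \<Rightarrow> uelem" where
  "Xop q l i = umul (Nop l i) (ustar (Mil q l i))"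

definition qsign :: "real \<Rightarrow> nat set \<Rightarrow> nat \<Rightarrow> complex" where
  "qsign q I x = (- complex_of_real q) powi (1 - int (card {y \<in> I. y \<le> x}))"

definition dbar :: "real \<Rightarrow> nat \<Rightarrow> (nat set \<Rightarrow> functional) \<Rightarrow> nat set \<Rightarrow> functional" where
  "dbar q l \<omega> I = (\<lambda>w. \<Sum>x \<in> I. qsign q I x *
      ract (\<omega> (I - {x})) (usinv q (umul (ugen Kh) (Xop q l x))) w)"

definition dbar0 :: "real \<Rightarrow> nat \<Rightarrow> functional \<Rightarrow> nat \<Rightarrow> functional" where
  "dbar0 q l a i = ract a (usinv q (umul (ugen Kh) (Xop q l i)))"

definition qwedge :: "real \<Rightarrow> (nat \<Rightarrow> functional) \<Rightarrow> (nat set \<Rightarrow> functional) \<Rightarrow> nat set \<Rightarrow> functional" where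
  "qwedge q \<eta> \<omega> I = (\<lambda>w. \<Sum>x \<in> I. qsign q I x * conv (\<eta> x) (\<omega> (I - {x})) w)"

end

theory Submission
  imports Defs
begin

declare sum.cl_ivl_Suc[simp del] prod.cl_ivl_Suc[simp del]

definition wact :: "functional \<Rightarrow> word \<Rightarrow> functional" where
  "wact f u = (\<lambda>w. f (u @ w))"

lemma sum_comp:
  "(\<Sum>(x, y) \<leftarrow> [(a @ u, b @ v). (a, b) \<leftarrow> A, (u, v) \<leftarrow> B]. \<phi> x y)
   = (\<Sum>(a, b) \<leftarrow> A. \<Sum>(u, v) \<leftarrow> B. \<phi> (a @ u) (b @ v))"
proof (induction A)
  case Nil then show ?case by simp
next
  case (Cons p A)
  obtain a b where p: "p = (a, b)" by (cases p)
  have "(\<Sum>(x, y) \<leftarrow> [(a @ u, b @ v). (u, v) \<leftarrow> B]. \<phi> x y) = (\<Sum>(u, v) \<leftarrow> B. \<phi> (a @ u) (b @ v))"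
    by (induction B) auto
  then show ?case using Cons p by simp
qed

lemma coprod_append_sum:
  "(\<Sum>(x, y) \<leftarrow> coprod (u @ v). \<phi> x y) = (\<Sum>(a, b) \<leftarrow> coprod u. \<Sum>(c, d) \<leftarrow> coprod v. \<phi> (a @ c) (b @ d))"
proof (induction u arbitrary: \<phi>)
  case Nil then show ?case by simp
next
  case (Cons g u)
  have "(\<Sum>(x, y) \<leftarrow> coprod ((g # u) @ v). \<phi> x y)
      = (\<Sum>(a, b) \<leftarrow> coprod_gen g. \<Sum>(x, y) \<leftarrow> coprod (u @ v). \<phi> (a @ x) (b @ y))"
    by (simp add: sum_comp)
  also have "\<dots> = (\<Sum>(a, b) \<leftarrow> coprod_gen g. \<Sum>(c, d) \<leftarrow> coprod u. \<Sum>(e, f) \<leftarrow> coprod v. \<phi> (a @ c @ e) (b @ d @ f))"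
    using Cons.IH by simp
  also have "\<dots> = (\<Sum>(x, y) \<leftarrow> coprod (g # u). \<Sum>(e, f) \<leftarrow> coprod v. \<phi> (x @ e) (y @ f))"
    by (simp add: sum_comp)
  finally show ?case .
qed

lemma conv_wact:
  "wact (conv f g) u = (\<lambda>w. \<Sum>(a, b) \<leftarrow> coprod u. conv (wact f a) (wact g b) w)"
  unfolding wact_def conv_def by (rule ext) (simp add: coprod_append_sum)

fun gl :: "gen \<Rightarrow> bool" where
  "gl (Eg i) = False" | "gl (Fg i) = False" | "gl _ = True"

lemma coprod_gen_gl: "gl g \<Longrightarrow> coprod_gen g = [([g], [g])]"
  by (cases g) auto

lemma coprod_gl: "list_all gl w \<Longrightarrow> coprod w = [(w, w)]"
  by (induction w) (auto simp: coprod_gen_gl)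

lemma wact_append: "wact f (u @ v) = wact (wact f u) v"
  unfolding wact_def by simp

lemma wact_Nil[simp]: "wact f [] = f"
  unfolding wact_def by simp

lemma Aq_zero: "(\<lambda>w. 0) \<in> Aq q l"
  using Aq.smult[OF Aq.unit, where c=0] by simp

lemma Aq_sum_list: "(\<And>x. x \<in> set xs \<Longrightarrow> F x \<in> Aq q l) \<Longrightarrow> (\<lambda>w. \<Sum>x\<leftarrow>xs. F x w) \<in> Aq q l"
proof (induction xs)
  case Nil then show ?case by (simp add: Aq_zero)
next
  case (Cons x xs)
  then show ?case using Aq.add[of "F x" q l "\<lambda>w. \<Sum>x\<leftarrow>xs. F x w"] by simp
qed

lemma Aq_sum: "finite S \<Longrightarrow> (\<And>x. x \<in> S \<Longrightarrow> F x \<in> Aq q l) \<Longrightarrow> (\<lambda>w. \<Sum>x\<in>S. F x w) \<in> Aq q l"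
proof (induction S rule: finite_induct)
  case empty then show ?case by (simp add: Aq_zero)
next
  case (insert x S)
  then show ?case using Aq.add[of "F x" q l "\<lambda>w. \<Sum>x\<in>S. F x w"] by simp
qed

lemma Aq_wact1: "f \<in> Aq q l \<Longrightarrow> wact f [x] \<in> Aq q l"
proof (induction f arbitrary: x rule: Aq.induct)
  case unit
  have "wact eps [x] = (\<lambda>w. eps_gen x * eps w)" unfolding wact_def eps_def by simp
  then show ?case using Aq.smult[OF Aq.unit] by simp
next
  case (coeff j k)
  have "wact (\<lambda>w. pi_word q l w j k) [x] = (\<lambda>w. \<Sum>m = 1..l + 1. pi_gen q l x j m * pi_word q l w m k)"
    unfolding wact_def by simp
  moreover have "(\<lambda>w. \<Sum>m = 1..l + 1. pi_gen q l x j m * pi_word q l w m k) \<in> Aq q l"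
    by (rule Aq_sum) (use coeff in \<open>auto intro!: Aq.smult Aq.coeff\<close>)
  ultimately show ?case by simp
next
  case (add f g)
  then show ?case using Aq.add unfolding wact_def by fastforce
next
  case (smult f c)
  then show ?case using Aq.smult unfolding wact_def by fastforce
next
  case (mult f g)
  have "wact (conv f g) [x] = (\<lambda>w. \<Sum>(a, b) \<leftarrow> coprod [x]. conv (wact f a) (wact g b) w)"
    by (rule conv_wact)
  moreover have "(\<lambda>w. \<Sum>(a, b) \<leftarrow> coprod [x]. conv (wact f a) (wact g b) w) \<in> Aq q l"
  proof -
    have "(\<lambda>w. \<Sum>p \<leftarrow> coprod [x]. (\<lambda>(a,b). conv (wact f a) (wact g b)) p w) \<in> Aq q l"
      by (rule Aq_sum_list) (cases x; auto intro!: Aq.mult mult)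
    then show ?thesis by (simp add: case_prod_unfold)
  qed
  ultimately show ?case by simp
qed

lemma Aq_wact: "f \<in> Aq q l \<Longrightarrow> wact f u \<in> Aq q l"
proof (induction u arbitrary: f rule: rev_induct)
  case Nil then show ?case by simp
next
  case (snoc x u)
  then show ?case by (simp add: wact_append Aq_wact1)
qed

fun dexp :: "nat \<Rightarrow> gen \<Rightarrow> nat \<Rightarrow> real" where
  "dexp l (Kp i) j = ((if j = i + 1 then 1 else 0) - (if j = i then 1 else 0)) / 2"
| "dexp l (Km i) j = - (((if j = i + 1 then 1 else 0) - (if j = i then 1 else 0)) / 2)"
| "dexp l Kh j = 2 / (real l + 1) * khat_exp l j"
| "dexp l Khm j = - (2 / (real l + 1) * khat_exp l j)"
| "dexp l (Eg i) j = 0"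
| "dexp l (Fg i) j = 0"

definition wexp :: "nat \<Rightarrow> word \<Rightarrow> nat \<Rightarrow> real" where
  "wexp l w j = (\<Sum>g\<leftarrow>w. dexp l g j)"

lemma wexp_Nil[simp]: "wexp l [] j = 0" by (simp add: wexp_def)
lemma wexp_Cons[simp]: "wexp l (g # w) j = dexp l g j + wexp l w j" by (simp add: wexp_def)
lemma wexp_append[simp]: "wexp l (u @ w) j = wexp l u j + wexp l w j" by (simp add: wexp_def)

lemma pi_gen_gl: "gl g \<Longrightarrow> pi_gen q l g j m = (if j = m then complex_of_real (q powr dexp l g j) else 0)"
  by (cases g) auto

lemma sum_if_mult: "finite S \<Longrightarrow> j \<in> S \<Longrightarrow> (\<Sum>m\<in>S. (if j = m then c m else 0) * f m) = c j * (f j :: 'a::comm_semiring_1)"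
proof -
  assume "finite S" "j \<in> S"
  have "(\<Sum>m\<in>S. (if j = m then c m else 0) * f m) = (\<Sum>m\<in>S. if j = m then c m * f m else 0)"
    by (rule sum.cong) simp_all
  also have "\<dots> = c j * f j" using \<open>finite S\<close> \<open>j \<in> S\<close> by (simp add: sum.delta)
  finally show ?thesis .
qed

lemma sum_if_mult2: "finite S \<Longrightarrow> j \<in> S \<Longrightarrow> (\<Sum>m\<in>S. (if m = j then c m else 0) * f m) = c j * (f j :: 'a::comm_semiring_1)"
  using sum_if_mult[of S j c f] by (simp add: eq_commute)

lemma pi_word_append:
  "j \<in> {1..l+1} \<Longrightarrow> pi_word q l (u @ v) j k = (\<Sum>m = 1..l + 1. pi_word q l u j m * pi_word q l v m k)"
proof (induction u arbitrary: j)
  case Nil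
  then show ?case by (subst pi_word.simps, subst sum_if_mult) auto
next
  case (Cons g u)
  have "pi_word q l ((g # u) @ v) j k = (\<Sum>m' = 1..l + 1. pi_gen q l g j m' * pi_word q l (u @ v) m' k)"
    by simp
  also have "\<dots> = (\<Sum>m' = 1..l + 1. pi_gen q l g j m' * (\<Sum>m = 1..l + 1. pi_word q l u m' m * pi_word q l v m k))"
    using Cons.IH by simp
  also have "\<dots> = (\<Sum>m = 1..l + 1. (\<Sum>m' = 1..l + 1. pi_gen q l g j m' * pi_word q l u m' m) * pi_word q l v m k)"
    by (simp only: sum_distrib_left sum_distrib_right mult.assoc, rule sum.swap)
  finally show ?case by simp
qed

lemma pi_word_Cons_gl:
  "gl g \<Longrightarrow> j \<in> {1..l+1} \<Longrightarrow> pi_word q l (g # w) j k = complex_of_real (q powr dexp l g j) * pi_word q l w j k"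
  by (subst pi_word.simps, subst pi_gen_gl, assumption, subst sum_if_mult) auto

lemma pi_word_gl:
  "0 < q \<Longrightarrow> list_all gl w \<Longrightarrow> j \<in> {1..l+1} \<Longrightarrow>
   pi_word q l w j k = (if j = k then complex_of_real (q powr wexp l w j) else 0)"
proof (induction w)
  case Nil then show ?case by simp
next
  case (Cons g w)
  then show ?case by (simp add: pi_word_Cons_gl powr_add del: pi_word.simps)
qed

lemma pi_word_Fg:
  "1 \<le> p \<Longrightarrow> p \<le> l \<Longrightarrow> pi_word q l (Fg p # v) m k = (if m = p then pi_word q l v (p + 1) k else 0)"
proof -
  assume p: "1 \<le> p" "p \<le> l"
  have "pi_word q l (Fg p # v) m k = (\<Sum>m' = 1..l + 1. (if m' = p + 1 then (if m = p then 1 else 0) else 0) * pi_word q l v m' k)"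
    by (subst pi_word.simps) (rule sum.cong, auto)
  also have "\<dots> = (if m = p then pi_word q l v (p + 1) k else 0)"
    using p by (subst sum_if_mult2) auto
  finally show ?thesis .
qed

lemma eps_append: "eps (u @ v) = eps u * eps v"
  by (simp add: eps_def)

lemma eps_gl: "list_all gl w \<Longrightarrow> eps w = 1"
proof (induction w)
  case Nil then show ?case by (simp add: eps_def)
next
  case (Cons g w) then show ?case by (cases g) (auto simp: eps_def)
qed

lemma conv_mid:
  "conv f g (u @ x @ v) = (\<Sum>(a, b) \<leftarrow> coprod u. \<Sum>(c, d) \<leftarrow> coprod x. \<Sum>(e, h) \<leftarrow> coprod v. f (a @ c @ e) * g (b @ d @ h))"
  unfolding conv_def by (simp add: coprod_append_sum)

definition R1 :: "nat \<Rightarrow> functional \<Rightarrow> bool" where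
  "R1 l f \<longleftrightarrow> (\<forall>u v w1 w2. list_all gl w1 \<longrightarrow> list_all gl w2 \<longrightarrow>
      (\<forall>j\<in>{1..l+1}. wexp l w1 j = wexp l w2 j) \<longrightarrow> f (u @ w1 @ v) = f (u @ w2 @ v))"

lemma Aq_R1: assumes q: "0 < q" and "f \<in> Aq q l" shows "R1 l f"
  using assms(2)
proof (induction f rule: Aq.induct)
  case unit then show ?case by (simp add: R1_def eps_append eps_gl)
next
  case (coeff j k)
  show ?case unfolding R1_def
  proof (intro allI impI)
    fix u v w1 w2 assume g1: "list_all gl w1" and g2: "list_all gl w2"
      and e: "\<forall>j\<in>{1..l+1}. wexp l w1 j = wexp l w2 j"
    have "pi_word q l (u @ w1 @ v) j k = (\<Sum>m = 1..l + 1. pi_word q l u j m * pi_word q l (w1 @ v) m k)"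
      using coeff by (simp add: pi_word_append)
    also have "\<dots> = (\<Sum>m = 1..l + 1. pi_word q l u j m * pi_word q l (w2 @ v) m k)"
    proof (rule sum.cong[OF refl])
      fix m assume m: "m \<in> {1..l+1}"
      have "pi_word q l (w1 @ v) m k = (\<Sum>m' = 1..l + 1. pi_word q l w1 m m' * pi_word q l v m' k)"
        using m by (simp add: pi_word_append)
      also have "\<dots> = complex_of_real (q powr wexp l w1 m) * pi_word q l v m k"
        using m g1 by (subst pi_word_gl, simp_all add: \<open>0 < q\<close>, subst sum_if_mult, auto)
      also have "\<dots> = complex_of_real (q powr wexp l w2 m) * pi_word q l v m k"
        using m e by simp
      also have "\<dots> = (\<Sum>m' = 1..l + 1. pi_word q l w2 m m' * pi_word q l v m' k)"
        using m g2 by (subst pi_word_gl, simp_all add: \<open>0 < q\<close>, subst sum_if_mult, auto)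
      also have "\<dots> = pi_word q l (w2 @ v) m k"
        using m by (simp add: pi_word_append)
      finally show "pi_word q l u j m * pi_word q l (w1 @ v) m k = pi_word q l u j m * pi_word q l (w2 @ v) m k"
        by simp
    qed
    also have "\<dots> = pi_word q l (u @ w2 @ v) j k"
      using coeff by (simp add: pi_word_append)
    finally show "pi_word q l (u @ w1 @ v) j k = pi_word q l (u @ w2 @ v) j k" .
  qed
next
  case (add f g)
  show ?case unfolding R1_def
  proof (intro allI impI)
    fix u v w1 w2 assume "list_all gl w1" "list_all gl w2" "\<forall>j\<in>{1..l+1}. wexp l w1 j = wexp l w2 j"
    then have "f (u @ w1 @ v) = f (u @ w2 @ v)" "g (u @ w1 @ v) = g (u @ w2 @ v)"
      using add.IH unfolding R1_def by blast+
    then show "f (u @ w1 @ v) + g (u @ w1 @ v) = f (u @ w2 @ v) + g (u @ w2 @ v)" by simp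
  qed
next
  case (smult f c)
  show ?case unfolding R1_def
  proof (intro allI impI)
    fix u v w1 w2 assume "list_all gl w1" "list_all gl w2" "\<forall>j\<in>{1..l+1}. wexp l w1 j = wexp l w2 j"
    then have "f (u @ w1 @ v) = f (u @ w2 @ v)"
      using smult.IH unfolding R1_def by blast
    then show "c * f (u @ w1 @ v) = c * f (u @ w2 @ v)" by simp
  qed
next
  case (mult f g)
  show ?case unfolding R1_def
  proof (intro allI impI)
    fix u v w1 w2 assume g1: "list_all gl w1" and g2: "list_all gl w2"
      and e: "\<forall>j\<in>{1..l+1}. wexp l w1 j = wexp l w2 j"
    have "f (a @ w1 @ c) * g (b @ w1 @ d) = f (a @ w2 @ c) * g (b @ w2 @ d)" for a b c d
    proof -
      have "f (a @ w1 @ c) = f (a @ w2 @ c)" "g (b @ w1 @ d) = g (b @ w2 @ d)"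
        using mult.IH g1 g2 e unfolding R1_def by blast+
      then show ?thesis by simp
    qed
    then show "conv f g (u @ w1 @ v) = conv f g (u @ w2 @ v)"
      unfolding conv_mid coprod_gl[OF g1] coprod_gl[OF g2] by simp
  qed
qed

lemma sum_list_swap:
  "(\<Sum>x\<leftarrow>xs. \<Sum>y\<leftarrow>ys. F x y) = (\<Sum>y\<leftarrow>ys. \<Sum>x\<leftarrow>xs. (F x y :: 'a::comm_monoid_add))"
  by (induction xs) (simp_all add: sum_list_addf)

lemma conv_mid2:
  "conv f g (u @ x @ v) = (\<Sum>(a, b) \<leftarrow> coprod u. \<Sum>(e, h) \<leftarrow> coprod v. \<Sum>(c, d) \<leftarrow> coprod x. f (a @ c @ e) * g (b @ d @ h))"
  unfolding conv_mid by (simp add: case_prod_unfold sum_list_swap[where xs="coprod x"])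

lemma sum2_cong_mult:
  "(\<And>a b e h. P a b e h = C * Q a b e h) \<Longrightarrow>
   (\<Sum>(a, b) \<leftarrow> A. \<Sum>(e, h) \<leftarrow> B. P a b e h) = C * (\<Sum>(a, b) \<leftarrow> A. \<Sum>(e, h) \<leftarrow> B. (Q a b e h :: complex))"
  by (simp add: case_prod_unfold sum_list_const_mult)

definition R2 :: "real \<Rightarrow> nat \<Rightarrow> functional \<Rightarrow> bool" where
  "R2 q l f \<longleftrightarrow> (\<forall>u v g p. gl g \<longrightarrow> 1 \<le> p \<longrightarrow> p \<le> l \<longrightarrow>
      f (u @ [g, Fg p] @ v) = complex_of_real (q powr (dexp l g p - dexp l g (p + 1))) * f (u @ [Fg p, g] @ v))"

lemma R1_swap: "R1 l f \<Longrightarrow> gl g \<Longrightarrow> gl h \<Longrightarrow> f (u @ [g, h] @ v) = f (u @ [h, g] @ v)"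
proof -
  assume r: "R1 l f" and "gl g" "gl h"
  then have "list_all gl [g, h]" "list_all gl [h, g]" by simp_all
  moreover have "\<forall>j\<in>{1..l+1}. wexp l [g, h] j = wexp l [h, g] j" by simp
  ultimately show ?thesis using r unfolding R1_def by blast
qed

lemma Aq_R2: assumes q: "0 < q" and "f \<in> Aq q l" shows "R2 q l f"
  using assms(2)
proof (induction f rule: Aq.induct)
  case unit then show ?case by (simp add: R2_def eps_append eps_def)
next
  case (coeff j k)
  show ?case unfolding R2_def
  proof (intro allI impI)
    fix u v g p assume g: "gl g" and p: "1 \<le> p" "p \<le> l"
    define C where "C = complex_of_real (q powr (dexp l g p - dexp l g (p + 1)))"
    have *: "pi_word q l (g # Fg p # v) m k = C * pi_word q l (Fg p # g # v) m k" if m: "m \<in> {1..l+1}" for m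
    proof -
      have "pi_word q l (g # Fg p # v) m k = complex_of_real (q powr dexp l g m) * (if m = p then pi_word q l v (p + 1) k else 0)"
        using g m p by (simp add: pi_word_Cons_gl pi_word_Fg del: pi_word.simps)
      moreover have "pi_word q l (Fg p # g # v) m k = (if m = p then complex_of_real (q powr dexp l g (p+1)) * pi_word q l v (p + 1) k else 0)"
        using g m p by (simp add: pi_word_Cons_gl pi_word_Fg del: pi_word.simps)
      moreover have "complex_of_real (q powr dexp l g p) = C * complex_of_real (q powr dexp l g (p+1))"
        unfolding C_def powr_diff of_real_divide using q by simp
      ultimately show ?thesis by simp
    qed
    have "pi_word q l (u @ [g, Fg p] @ v) j k = (\<Sum>m = 1..l + 1. pi_word q l u j m * pi_word q l (g # Fg p # v) m k)"
      using coeff by (simp add: pi_word_append del: pi_word.simps)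
    also have "\<dots> = (\<Sum>m = 1..l + 1. C * (pi_word q l u j m * pi_word q l (Fg p # g # v) m k))"
      by (rule sum.cong) (simp_all add: * del: pi_word.simps)
    also have "\<dots> = C * pi_word q l (u @ [Fg p, g] @ v) j k"
      using coeff by (simp add: pi_word_append sum_distrib_left del: pi_word.simps)
    finally show "pi_word q l (u @ [g, Fg p] @ v) j k = complex_of_real (q powr (dexp l g p - dexp l g (p + 1))) * pi_word q l (u @ [Fg p, g] @ v) j k"
      by (simp add: C_def)
  qed
next
  case (add f g)
  show ?case unfolding R2_def
  proof (intro allI impI)
    fix u v g' p assume "gl g'" "1 \<le> p" "p \<le> l"
    then have "f (u @ [g', Fg p] @ v) = complex_of_real (q powr (dexp l g' p - dexp l g' (p + 1))) * f (u @ [Fg p, g'] @ v)"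
      "g (u @ [g', Fg p] @ v) = complex_of_real (q powr (dexp l g' p - dexp l g' (p + 1))) * g (u @ [Fg p, g'] @ v)"
      using add.IH unfolding R2_def by blast+
    then show "f (u @ [g', Fg p] @ v) + g (u @ [g', Fg p] @ v) = complex_of_real (q powr (dexp l g' p - dexp l g' (p + 1))) * (f (u @ [Fg p, g'] @ v) + g (u @ [Fg p, g'] @ v))"
      by (simp add: distrib_left)
  qed
next
  case (smult f c)
  show ?case unfolding R2_def
  proof (intro allI impI)
    fix u v g' p assume "gl g'" "1 \<le> p" "p \<le> l"
    then have "f (u @ [g', Fg p] @ v) = complex_of_real (q powr (dexp l g' p - dexp l g' (p + 1))) * f (u @ [Fg p, g'] @ v)"
      using smult.IH unfolding R2_def by blast
    then show "c * f (u @ [g', Fg p] @ v) = complex_of_real (q powr (dexp l g' p - dexp l g' (p + 1))) * (c * f (u @ [Fg p, g'] @ v))"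
      by simp
  qed
next
  case (mult f g)
  have r1f: "R1 l f" and r1g: "R1 l g" using mult.hyps Aq_R1 q by blast+
  show ?case unfolding R2_def
  proof (intro allI impI)
    fix u v g' p assume gg: "gl g'" and p: "1 \<le> p" "p \<le> l"
    define C where "C = complex_of_real (q powr (dexp l g' p - dexp l g' (p + 1)))"
    have Rf: "f (x @ [g', Fg p] @ y) = C * f (x @ [Fg p, g'] @ y)" for x y
      using mult.IH(1) gg p unfolding R2_def C_def by blast
    have Rg: "g (x @ [g', Fg p] @ y) = C * g (x @ [Fg p, g'] @ y)" for x y
      using mult.IH(2) gg p unfolding R2_def C_def by blast
    have c1: "coprod [g', Fg p] = [([g', Fg p], [g', Kp p]), ([g', Km p], [g', Fg p])]"
      using gg by (simp add: coprod_gen_gl)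
    have c2: "coprod [Fg p, g'] = [([Fg p, g'], [Kp p, g']), ([Km p, g'], [Fg p, g'])]"
      using gg by (simp add: coprod_gen_gl)
    have sf: "f (a @ [g', Km p] @ e) = f (a @ [Km p, g'] @ e)" for a e
      using R1_swap[OF r1f gg, of "Km p"] by simp
    have sg: "g (b @ [g', Kp p] @ e) = g (b @ [Kp p, g'] @ e)" for b e
      using R1_swap[OF r1g gg, of "Kp p"] by simp
    have "conv f g (u @ [g', Fg p] @ v) = C * conv f g (u @ [Fg p, g'] @ v)"
      unfolding conv_mid2
    proof (rule sum2_cong_mult)
      fix a b e h
      show "(\<Sum>(c, d)\<leftarrow>coprod [g', Fg p]. f (a @ c @ e) * g (b @ d @ h)) =
            C * (\<Sum>(c, d)\<leftarrow>coprod [Fg p, g']. f (a @ c @ e) * g (b @ d @ h))"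
        unfolding c1 c2 using Rf[of a e] Rg[of b h] sf[of a e] sg[of b h]
        by (simp add: algebra_simps)
    qed
    then show "conv f g (u @ [g', Fg p] @ v) = complex_of_real (q powr (dexp l g' p - dexp l g' (p + 1))) * conv f g (u @ [Fg p, g'] @ v)"
      by (simp add: C_def)
  qed
qed

lemma sum_list_sum_swap:
  "(\<Sum>p\<leftarrow>xs. \<Sum>x\<in>S. G x p) = (\<Sum>x\<in>S. \<Sum>p\<leftarrow>xs. (G x p :: complex))"
  by (induction xs) (simp_all add: sum.distrib)

lemma conv_sum_left:
  "conv (\<lambda>w. \<Sum>x\<in>S. F x w) g w = (\<Sum>x\<in>S. conv (F x) g w)"
  unfolding conv_def by (simp add: case_prod_unfold sum_distrib_right sum_list_sum_swap)

lemma conv_sum_right: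
  "conv f (\<lambda>w. \<Sum>x\<in>S. F x w) w = (\<Sum>x\<in>S. conv f (F x) w)"
  unfolding conv_def by (simp add: case_prod_unfold sum_distrib_left sum_list_sum_swap)

lemma conv_scale_left: "conv (\<lambda>w. c * f w) g w = c * conv f g w"
  unfolding conv_def by (simp add: case_prod_unfold sum_list_const_mult mult.assoc)

lemma conv_scale_right: "conv f (\<lambda>w. c * g w) w = c * conv f g w"
  unfolding conv_def by (simp add: case_prod_unfold sum_list_const_mult algebra_simps)

definition eigdec :: "nat \<Rightarrow> functional \<Rightarrow> bool" where
  "eigdec l f \<longleftrightarrow> (\<exists>S c. finite S \<and> (\<forall>x\<in>S. (0::real) < x) \<and> f = (\<lambda>w. \<Sum>x\<in>S. c x w) \<and>
      (\<forall>x\<in>S. wact (c x) [Kp l] = (\<lambda>w. complex_of_real x * c x w)))"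

lemma Aq_eigdec: assumes q: "0 < q" and "f \<in> Aq q l" and l: "1 \<le> l" shows "eigdec l f"
  using assms(2)
proof (induction f rule: Aq.induct)
  case unit
  have "wact eps [Kp l] w = eps w" for w by (simp add: wact_def eps_def)
  then have "wact eps [Kp l] = (\<lambda>w. complex_of_real 1 * eps w)" by auto
  then show ?case unfolding eigdec_def
    by (intro exI[of _ "{1}"] exI[of _ "\<lambda>_. eps"]) auto
next
  case (coeff j k)
  show ?case unfolding eigdec_def
    apply (rule exI[of _ "{q powr dexp l (Kp l) j}"], rule exI[of _ "\<lambda>_ w. pi_word q l w j k"])
    using coeff q by (simp add: wact_def pi_word_Cons_gl del: pi_word.simps dexp.simps)
next
  case (add f g)
  obtain S1 c1 where 1: "finite S1" "\<forall>x\<in>S1. 0 < x" "f = (\<lambda>w. \<Sum>x\<in>S1. c1 x w)"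
    "\<forall>x\<in>S1. wact (c1 x) [Kp l] = (\<lambda>w. complex_of_real x * c1 x w)"
    using add.IH(1) unfolding eigdec_def by blast
  obtain S2 c2 where 2: "finite S2" "\<forall>x\<in>S2. 0 < x" "g = (\<lambda>w. \<Sum>x\<in>S2. c2 x w)"
    "\<forall>x\<in>S2. wact (c2 x) [Kp l] = (\<lambda>w. complex_of_real x * c2 x w)"
    using add.IH(2) unfolding eigdec_def by blast
  define c where "c x = (\<lambda>w. (if x \<in> S1 then c1 x w else 0) + (if x \<in> S2 then c2 x w else 0))" for x
  have "(\<lambda>w. f w + g w) = (\<lambda>w. \<Sum>x\<in>S1 \<union> S2. c x w)"
  proof
    fix w
    have "(\<Sum>x\<in>S1 \<union> S2. c x w) = (\<Sum>x\<in>S1 \<union> S2. if x \<in> S1 then c1 x w else 0) + (\<Sum>x\<in>S1 \<union> S2. if x \<in> S2 then c2 x w else 0)"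
      unfolding c_def by (simp add: sum.distrib)
    also have "\<dots> = (\<Sum>x\<in>S1. c1 x w) + (\<Sum>x\<in>S2. c2 x w)"
      using 1(1) 2(1) by (simp add: sum.inter_restrict[symmetric] Int_absorb1 Int_absorb2)
    finally show "f w + g w = (\<Sum>x\<in>S1 \<union> S2. c x w)" using 1(3) 2(3) by simp
  qed
  moreover have "\<forall>x\<in>S1 \<union> S2. wact (c x) [Kp l] = (\<lambda>w. complex_of_real x * c x w)"
  proof
    fix x assume "x \<in> S1 \<union> S2"
    show "wact (c x) [Kp l] = (\<lambda>w. complex_of_real x * c x w)"
    proof
      fix w
      have a: "x \<in> S1 \<Longrightarrow> c1 x (Kp l # w) = complex_of_real x * c1 x w"
        using 1(4) unfolding wact_def by (metis append_Cons append_Nil)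
      have b: "x \<in> S2 \<Longrightarrow> c2 x (Kp l # w) = complex_of_real x * c2 x w"
        using 2(4) unfolding wact_def by (metis append_Cons append_Nil)
      show "wact (c x) [Kp l] w = complex_of_real x * c x w"
        unfolding c_def wact_def using a b by (simp add: distrib_left)
    qed
  qed
  ultimately show ?case unfolding eigdec_def using 1 2
    by (intro exI[of _ "S1 \<union> S2"] exI[of _ c]) auto
next
  case (smult f c0)
  obtain S1 c1 where 1: "finite S1" "\<forall>x\<in>S1. 0 < x" "f = (\<lambda>w. \<Sum>x\<in>S1. c1 x w)"
    "\<forall>x\<in>S1. wact (c1 x) [Kp l] = (\<lambda>w. complex_of_real x * c1 x w)"
    using smult.IH unfolding eigdec_def by blast
  show ?case unfolding eigdec_def
  proof (intro exI[of _ S1] exI[of _ "\<lambda>x w. c0 * c1 x w"] conjI)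
    show "(\<lambda>w. c0 * f w) = (\<lambda>w. \<Sum>x\<in>S1. c0 * c1 x w)" using 1(3) by (simp add: sum_distrib_left)
    show "\<forall>x\<in>S1. wact (\<lambda>w. c0 * c1 x w) [Kp l] = (\<lambda>w. complex_of_real x * (c0 * c1 x w))"
    proof (intro ballI ext)
      fix x w assume "x \<in> S1"
      then have "c1 x (Kp l # w) = complex_of_real x * c1 x w"
        using 1(4) unfolding wact_def by (metis append_Cons append_Nil)
      then show "wact (\<lambda>w. c0 * c1 x w) [Kp l] w = complex_of_real x * (c0 * c1 x w)"
        unfolding wact_def by simp
    qed
  qed (use 1 in auto)
next
  case (mult f g)
  obtain S1 c1 where 1: "finite S1" "\<forall>x\<in>S1. 0 < x" "f = (\<lambda>w. \<Sum>x\<in>S1. c1 x w)"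
    "\<forall>x\<in>S1. wact (c1 x) [Kp l] = (\<lambda>w. complex_of_real x * c1 x w)"
    using mult.IH(1) unfolding eigdec_def by blast
  obtain S2 c2 where 2: "finite S2" "\<forall>x\<in>S2. 0 < x" "g = (\<lambda>w. \<Sum>x\<in>S2. c2 x w)"
    "\<forall>x\<in>S2. wact (c2 x) [Kp l] = (\<lambda>w. complex_of_real x * c2 x w)"
    using mult.IH(2) unfolding eigdec_def by blast
  define P where "P = S1 \<times> S2"
  define m where "m = (\<lambda>p::real\<times>real. fst p * snd p)"
  define c where "c y = (\<lambda>w. \<Sum>p\<in>{p\<in>P. m p = y}. conv (c1 (fst p)) (c2 (snd p)) w)" for y
  have fP: "finite P" using 1(1) 2(1) P_def by simp
  have "conv f g = (\<lambda>w. \<Sum>y\<in>m ` P. c y w)"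
  proof
    fix w
    have "conv f g w = (\<Sum>x\<in>S1. \<Sum>y\<in>S2. conv (c1 x) (c2 y) w)"
      using 1(3) 2(3) by (simp add: conv_sum_left conv_sum_right)
    also have "\<dots> = (\<Sum>p\<in>P. conv (c1 (fst p)) (c2 (snd p)) w)"
      unfolding P_def by (simp add: sum.cartesian_product case_prod_unfold)
    also have "\<dots> = (\<Sum>y\<in>m ` P. c y w)"
      unfolding c_def using fP by (rule sum.image_gen)
    finally show "conv f g w = (\<Sum>y\<in>m ` P. c y w)" .
  qed
  moreover have "\<forall>y\<in>m ` P. wact (c y) [Kp l] = (\<lambda>w. complex_of_real y * c y w)"
  proof (intro ballI ext)
    fix y w assume "y \<in> m ` P"
    have e: "wact (conv (c1 (fst p)) (c2 (snd p))) [Kp l] w = complex_of_real y * conv (c1 (fst p)) (c2 (snd p)) w"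
      if "p \<in> {p\<in>P. m p = y}" for p
    proof -
      have "fst p \<in> S1" "snd p \<in> S2" "y = fst p * snd p" using that P_def m_def by auto
      then show ?thesis
        using 1(4) 2(4) by (simp add: conv_wact coprod_gen_gl conv_scale_left conv_scale_right)
    qed
    show "wact (c y) [Kp l] w = complex_of_real y * c y w"
      unfolding c_def using e by (simp add: wact_def sum_distrib_left)
  qed
  moreover have "\<forall>x\<in>m ` P. 0 < x" using 1(2) 2(2) unfolding P_def m_def by auto
  ultimately show ?case unfolding eigdec_def using fP
    by (intro exI[of _ "m ` P"] exI[of _ c]) auto
qed

lemma wact_eig_pt: "wact c [Kp l] = (\<lambda>w. complex_of_real x * c w) \<Longrightarrow> c (Kp l # w) = complex_of_real x * c w"
  unfolding wact_def by (metis append_Cons append_Nil)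

lemma eig_indep:
  "finite S \<Longrightarrow> (\<forall>x\<in>S. wact (c x) [Kp l] = (\<lambda>w. complex_of_real x * c x w)) \<Longrightarrow>
   (\<forall>w. (\<Sum>x\<in>S. c x w) = 0) \<Longrightarrow> \<forall>x\<in>S. \<forall>w. c x w = 0"
proof (induction S arbitrary: c rule: finite_induct)
  case empty then show ?case by simp
next
  case (insert m S)
  have eig: "x \<in> insert m S \<Longrightarrow> c x (Kp l # w) = complex_of_real x * c x w" for x w
    using insert.prems(1) wact_eig_pt by blast
  have h0: "c m w + (\<Sum>x\<in>S. c x w) = 0" for w
    using insert.prems(2) insert.hyps by simp
  have h1: "complex_of_real m * c m w + (\<Sum>x\<in>S. complex_of_real x * c x w) = 0" for w
  proof -
    have "c m (Kp l # w) + (\<Sum>x\<in>S. c x (Kp l # w)) = 0" by (rule h0)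
    moreover have "(\<Sum>x\<in>S. c x (Kp l # w)) = (\<Sum>x\<in>S. complex_of_real x * c x w)"
      by (rule sum.cong) (simp_all add: eig)
    ultimately show ?thesis by (simp add: eig)
  qed
  define c' where "c' x = (\<lambda>w. (complex_of_real x - complex_of_real m) * c x w)" for x
  have "\<forall>x\<in>S. wact (c' x) [Kp l] = (\<lambda>w. complex_of_real x * c' x w)"
    unfolding c'_def wact_def using eig by (auto simp: fun_eq_iff)
  moreover have "\<forall>w. (\<Sum>x\<in>S. c' x w) = 0"
  proof
    fix w
    have "(\<Sum>x\<in>S. c' x w) = (\<Sum>x\<in>S. complex_of_real x * c x w) - complex_of_real m * (\<Sum>x\<in>S. c x w)"
      unfolding c'_def by (simp add: algebra_simps sum_subtractf sum_distrib_left)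
    also have "\<dots> = 0" using h0[of w] h1[of w]
      by (metis add.commute add_cancel_right_left add_diff_cancel_left' diff_self minus_diff_eq mult_minus_right neg_eq_iff_add_eq_0)
    finally show "(\<Sum>x\<in>S. c' x w) = 0" .
  qed
  ultimately have z: "\<forall>x\<in>S. \<forall>w. c' x w = 0" using insert.IH by blast
  have zS: "\<forall>x\<in>S. \<forall>w. c x w = 0"
  proof (intro ballI allI)
    fix x w assume x: "x \<in> S"
    then have "x \<noteq> m" using insert.hyps by auto
    then have "complex_of_real x - complex_of_real m \<noteq> 0" by simp
    moreover have "(complex_of_real x - complex_of_real m) * c x w = 0" using z x unfolding c'_def by blast
    ultimately show "c x w = 0" by simp
  qed
  then have cm: "c m w = 0" for w using h0[of w] by simp
  show ?case using zS cm by blast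
qed

lemma CP_gen:
  assumes "a \<in> CP q l" "isK l g"
  shows "fst (sinv_gen q g) * a (snd (sinv_gen q g) # w) = eps_gen g * a w"
proof -
  have "[(1, [g])] \<in> Kalg l" using assms(2) by (simp add: Kalg_def)
  then have "Lact q [(1, [g])] a w = ev eps [(1, [g])] * a w" using assms(1) unfolding CP_def by auto
  then show ?thesis
    by (simp add: Lact_def ract_def usinv_def ev_def eps_def case_prod_unfold Let_def)
qed

lemma CP_Aq: "a \<in> CP q l \<Longrightarrow> a \<in> Aq q l" by (simp add: CP_def)

lemma CP_Km: "a \<in> CP q l \<Longrightarrow> 1 \<le> i \<Longrightarrow> i \<le> l - 1 \<Longrightarrow> a (Km i # w) = a w"
  using CP_gen[of a q l "Kp i" w] by simp
lemma CP_Kp: "a \<in> CP q l \<Longrightarrow> 1 \<le> i \<Longrightarrow> i \<le> l - 1 \<Longrightarrow> a (Kp i # w) = a w"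
  using CP_gen[of a q l "Km i" w] by simp
lemma CP_Kh: "a \<in> CP q l \<Longrightarrow> a (Kh # w) = a w"
  using CP_gen[of a q l "Khm" w] by simp
lemma CP_Khm: "a \<in> CP q l \<Longrightarrow> a (Khm # w) = a w"
  using CP_gen[of a q l "Kh" w] by simp
lemma CP_Fg: "0 < q \<Longrightarrow> a \<in> CP q l \<Longrightarrow> 1 \<le> i \<Longrightarrow> i \<le> l - 1 \<Longrightarrow> a (Fg i # w) = 0"
  using CP_gen[of a q l "Fg i" w] by simp

lemma R1_use: "R1 l f \<Longrightarrow> list_all gl w1 \<Longrightarrow> list_all gl w2 \<Longrightarrow>
  (\<forall>j\<in>{1..l+1}. wexp l w1 j = wexp l w2 j) \<Longrightarrow> f (u @ w1 @ v) = f (u @ w2 @ v)"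
  unfolding R1_def by blast

lemma letters_inv: "(\<forall>g\<in>set W. \<forall>w. a (g # w) = a w) \<Longrightarrow> a (W @ w) = a w"
  by (induction W) auto

lemma wexp_replicate: "wexp l (replicate n g) j = real n * dexp l g j"
  by (simp add: wexp_def sum_list_replicate)

lemma wexp_concat: "wexp l (concat ws) j = (\<Sum>w\<leftarrow>ws. wexp l w j)"
  by (induction ws) auto

definition Wk :: "nat \<Rightarrow> word" where
  "Wk l = replicate (l + 1) Kh @ concat (map (\<lambda>i. replicate (2 * i) (Km i)) [1..<l])"

lemma wexp_Wk: assumes "1 \<le> l" shows "wexp l (Wk l) j = wexp l (replicate (2 * l) (Kp l)) j"
proof -
  define D where "D i = ((if j = i + 1 then 1 else 0) - (if j = i then 1 else 0) :: real)" for i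
  have k: "khat_exp l j = (\<Sum>i = 1..l. real i * (D i / 2))" unfolding khat_exp_def D_def by simp
  have "(\<Sum>i = 1..l. real i * (D i / 2)) = (\<Sum>i\<in>{1..<l}. real i * (D i / 2)) + real l * (D l / 2)"
  proof -
    have "{1..l} = insert l {1..<l}" using assms by auto
    then show ?thesis by (simp add: add.commute)
  qed
  moreover have "wexp l (concat (map (\<lambda>i. replicate (2 * i) (Km i)) [1..<l])) j = (\<Sum>i\<in>{1..<l}. real (2 * i) * (- (D i / 2)))"
    unfolding wexp_concat by (simp add: wexp_replicate D_def sum.distinct_set_conv_list[symmetric] o_def)
  moreover have "(\<Sum>i\<in>{1..<l}. real (2 * i) * (- (D i / 2))) = - 2 * (\<Sum>i\<in>{1..<l}. real i * (D i / 2))"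
    by (simp add: sum_distrib_left sum_negf[symmetric] algebra_simps)
  moreover have "dexp l (Kp l) j = D l / 2" by (simp add: D_def)
  moreover have "dexp l Kh j = 2 / (real l + 1) * khat_exp l j" by simp
  ultimately show ?thesis
    unfolding Wk_def using k by (simp add: wexp_replicate field_simps del: dexp.simps)
qed

lemma CP_Kpl:
  assumes q: "0 < q" and l: "1 \<le> l" and a: "a \<in> CP q l"
  shows "a (Kp l # w) = a w"
proof -
  have aA: "a \<in> Aq q l" using a by (simp add: CP_def)
  have inv: "\<forall>g\<in>set (Wk l). \<forall>w. a (g # w) = a w"
    unfolding Wk_def using a by (auto simp: CP_Kh CP_Km)
  have pow: "a (replicate (2 * l) (Kp l) @ w) = a w" for w
  proof -
    have g1: "list_all gl (replicate (2 * l) (Kp l))" by (simp add: list_all_iff)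
    have g2: "list_all gl (Wk l)" by (auto simp: list_all_iff Wk_def)
    have "a ([] @ replicate (2 * l) (Kp l) @ w) = a ([] @ Wk l @ w)"
      by (rule R1_use[OF Aq_R1[OF q aA] g1 g2]) (simp add: wexp_Wk[OF l])
    then show ?thesis using letters_inv[OF inv] by simp
  qed
  obtain S c where S: "finite S" "\<forall>x\<in>S. 0 < x" "a = (\<lambda>w. \<Sum>x\<in>S. c x w)"
    "\<forall>x\<in>S. wact (c x) [Kp l] = (\<lambda>w. complex_of_real x * c x w)"
    using Aq_eigdec[OF q aA l] unfolding eigdec_def by blast
  have eig: "x \<in> S \<Longrightarrow> c x (Kp l # w) = complex_of_real x * c x w" for x w
    using S(4) wact_eig_pt by blast
  have eign: "x \<in> S \<Longrightarrow> c x (replicate n (Kp l) @ w) = complex_of_real x ^ n * c x w" for x n w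
    by (induction n) (simp_all add: eig)
  define c' where "c' x = (\<lambda>w. (complex_of_real x ^ (2 * l) - 1) * c x w)" for x
  have "\<forall>x\<in>S. wact (c' x) [Kp l] = (\<lambda>w. complex_of_real x * c' x w)"
    unfolding c'_def wact_def using eig by (auto simp: fun_eq_iff)
  moreover have "\<forall>w. (\<Sum>x\<in>S. c' x w) = 0"
  proof
    fix w
    have "(\<Sum>x\<in>S. c' x w) = (\<Sum>x\<in>S. c x (replicate (2 * l) (Kp l) @ w)) - (\<Sum>x\<in>S. c x w)"
      unfolding c'_def by (simp add: eign algebra_simps sum_subtractf)
    also have "\<dots> = 0" using pow[of w] S(3) by simp
    finally show "(\<Sum>x\<in>S. c' x w) = 0" .
  qed
  ultimately have z: "\<forall>x\<in>S. \<forall>w. c' x w = 0" using eig_indep[OF S(1)] by blast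
  have c1: "x \<in> S \<Longrightarrow> x \<noteq> 1 \<Longrightarrow> c x w = 0" for x w
  proof -
    assume x: "x \<in> S" "x \<noteq> 1"
    have "x ^ (2 * l) \<noteq> 1"
    proof
      assume "x ^ (2 * l) = 1"
      then have "x ^ (2 * l) = 1 ^ (2 * l)" by simp
      moreover have "0 \<le> x" using x S(2) by auto
      ultimately have "x = 1" using power_eq_imp_eq_base[of x "2*l" 1] l by simp
      then show False using x by simp
    qed
    then have "complex_of_real x ^ (2 * l) - 1 \<noteq> 0"
      by (metis eq_iff_diff_eq_0 of_real_eq_1_iff of_real_power)
    moreover have "(complex_of_real x ^ (2 * l) - 1) * c x w = 0" using z x unfolding c'_def by blast
    ultimately show "c x w = 0" by simp
  qed
  have "a (Kp l # w) = (\<Sum>x\<in>S. complex_of_real x * c x w)" using S(3) eig by simp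
  also have "\<dots> = (\<Sum>x\<in>S. c x w)"
    by (rule sum.cong) (auto dest: c1)
  also have "\<dots> = a w" using S(3) by simp
  finally show ?thesis .
qed

lemma CP_Kml:
  assumes q: "0 < q" and l: "1 \<le> l" and a: "a \<in> CP q l"
  shows "a (Km l # w) = a w"
proof -
  have aA: "a \<in> Aq q l" using a by (simp add: CP_def)
  have "a (Km l # w) = a (Kp l # Km l # w)" using CP_Kpl[OF q l a] by simp
  also have "\<dots> = a ([] @ [Kp l, Km l] @ w)" by simp
  also have "\<dots> = a ([] @ [] @ w)"
  proof -
    have "list_all gl [Kp l, Km l]" "list_all gl []" by simp_all
    moreover have "\<forall>j\<in>{1..l+1}. wexp l [Kp l, Km l] j = wexp l [] j" by simp
    ultimately show ?thesis by (rule R1_use[OF Aq_R1[OF q aA]])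
  qed
  finally show ?thesis by simp
qed

lemma ract_append: "ract f (x @ y) = (\<lambda>w. ract f x w + ract f y w)"
  unfolding ract_def by simp

lemma ract_uscale: "ract f (uscale c x) = (\<lambda>w. c * ract f x w)"
  unfolding ract_def uscale_def by (simp add: case_prod_unfold sum_list_const_mult o_def mult.assoc)

lemma sum_umul: "(\<Sum>(c, w)\<leftarrow>umul x y. F c w) = (\<Sum>(c, u)\<leftarrow>x. \<Sum>(d, v)\<leftarrow>y. F (c * d) (u @ v))"
proof (induction x)
  case Nil then show ?case by (simp add: umul_def)
next
  case (Cons p x)
  obtain c u where p: "p = (c, u)" by (cases p)
  have "(\<Sum>(e, w)\<leftarrow>[(c * d, u @ v). (d, v) \<leftarrow> y]. F e w) = (\<Sum>(d, v)\<leftarrow>y. F (c * d) (u @ v))"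
    by (induction y) auto
  then show ?case using Cons p by (simp add: umul_def)
qed

lemma ract_umul: "ract f (umul x y) = ract (ract f x) y"
proof
  fix w
  have "ract f (umul x y) w = (\<Sum>(c, u)\<leftarrow>x. \<Sum>(d, v)\<leftarrow>y. c * d * f (u @ v @ w))"
    unfolding ract_def by (simp add: sum_umul)
  also have "\<dots> = (\<Sum>(d, v)\<leftarrow>y. \<Sum>(c, u)\<leftarrow>x. d * (c * f (u @ v @ w)))"
    by (simp add: case_prod_unfold sum_list_swap[where xs=x] algebra_simps)
  also have "\<dots> = ract (ract f x) y w"
    unfolding ract_def by (simp add: case_prod_unfold sum_list_const_mult)
  finally show "ract f (umul x y) w = ract (ract f x) y w" .
qed

lemma ract_single: "ract f [(c, u)] = (\<lambda>w. c * f (u @ w))"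
  unfolding ract_def by simp

lemma ract_scale_fun: "ract (\<lambda>w. c * f w) h = (\<lambda>w. c * ract f h w)"
  unfolding ract_def by (simp add: case_prod_unfold sum_list_const_mult algebra_simps)

lemma ract_nscale_fun: "ract (\<lambda>w. - (c * f w)) h = (\<lambda>w. - (c * ract f h w))"
  using ract_scale_fun[of "- c" f h] by simp

lemma ract_add_fun: "ract (\<lambda>w. f w + g w) h = (\<lambda>w. ract f h w + ract g h w)"
  unfolding ract_def by (simp add: case_prod_unfold sum_list_addf algebra_simps)

lemma ract_zero_fun: "ract (\<lambda>w. 0) h = (\<lambda>w. 0)"
  unfolding ract_def by (simp add: case_prod_unfold)

lemma sinv_word_append:
  "sinv_word q (A @ B) = (fst (sinv_word q A) * fst (sinv_word q B), snd (sinv_word q B) @ snd (sinv_word q A))"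
  by (induction A) (auto simp: case_prod_unfold Let_def)

definition tau :: "real \<Rightarrow> word \<Rightarrow> complex \<times> word" where
  "tau q u = sinv_word q (rev (map star_gen u))"

lemma tau_append: "tau q (u @ v) = (fst (tau q u) * fst (tau q v), snd (tau q u) @ snd (tau q v))"
  unfolding tau_def by (simp add: sinv_word_append mult.commute)

definition Tm :: "real \<Rightarrow> uelem \<Rightarrow> uelem" where
  "Tm q x = usinv q (ustar x)"

lemma ract_Tm: "ract f (Tm q x) = (\<lambda>w. \<Sum>(c, u)\<leftarrow>x. cnj c * fst (tau q u) * f (snd (tau q u) @ w))"
  unfolding ract_def Tm_def usinv_def ustar_def tau_def by (simp add: case_prod_unfold o_def)

lemma Tm_append: "Tm q (x @ y) = Tm q x @ Tm q y"
  unfolding Tm_def usinv_def ustar_def by simp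

lemma Tm_uscale: "ract f (Tm q (uscale c x)) = (\<lambda>w. cnj c * ract f (Tm q x) w)"
  unfolding ract_Tm uscale_def by (simp add: case_prod_unfold o_def sum_list_const_mult algebra_simps)

lemma Tm_umul: "ract f (Tm q (umul x y)) = ract (ract f (Tm q x)) (Tm q y)"
proof
  fix w
  have "ract f (Tm q (umul x y)) w = (\<Sum>(c, u)\<leftarrow>x. \<Sum>(d, v)\<leftarrow>y.
          cnj d * fst (tau q v) * (cnj c * fst (tau q u) * f (snd (tau q u) @ snd (tau q v) @ w)))"
    unfolding ract_Tm by (simp add: sum_umul tau_append algebra_simps)
  also have "\<dots> = (\<Sum>(d, v)\<leftarrow>y. \<Sum>(c, u)\<leftarrow>x.
          cnj d * fst (tau q v) * (cnj c * fst (tau q u) * f (snd (tau q u) @ snd (tau q v) @ w)))"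
    by (simp add: case_prod_unfold sum_list_swap[where xs=x])
  also have "\<dots> = ract (ract f (Tm q x)) (Tm q y) w"
    unfolding ract_Tm by (simp add: case_prod_unfold sum_list_const_mult)
  finally show "ract f (Tm q (umul x y)) w = ract (ract f (Tm q x)) (Tm q y) w" .
qed

lemma Tm_E: "Tm q (ugen (Eg j)) = [(- complex_of_real q, [Fg j])]"
  unfolding Tm_def usinv_def ustar_def ugen_def by simp

definition cF :: "nat \<Rightarrow> gen \<Rightarrow> gen \<Rightarrow> real" where
  "cF l g x = (case x of Fg p \<Rightarrow> dexp l g p - dexp l g (p + 1) | _ \<Rightarrow> 0)"

definition wF :: "nat \<Rightarrow> gen \<Rightarrow> word \<Rightarrow> real" where
  "wF l g u = (\<Sum>x\<leftarrow>u. cF l g x)"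

lemma R2_use: "R2 q l f \<Longrightarrow> gl g \<Longrightarrow> 1 \<le> p \<Longrightarrow> p \<le> l \<Longrightarrow>
  f (u @ [g, Fg p] @ v) = complex_of_real (q powr (dexp l g p - dexp l g (p + 1))) * f (u @ [Fg p, g] @ v)"
  unfolding R2_def by blast

lemma move_g:
  assumes r: "R2 q l f" and q: "0 < q" and g: "gl g"
  shows "(\<forall>z\<in>set w. \<exists>p. z = Fg p \<and> 1 \<le> p \<and> p \<le> l) \<Longrightarrow>
    f (x @ w @ [g] @ y) = complex_of_real (q powr (- wF l g w)) * f (x @ [g] @ w @ y)"
proof (induction w arbitrary: x)
  case Nil then show ?case using q by (simp add: wF_def)
next
  case (Cons z w)
  obtain p where z: "z = Fg p" "1 \<le> p" "p \<le> l" using Cons.prems by auto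
  define C where "C = q powr (dexp l g p - dexp l g (p + 1))"
  have C0: "C > 0" using q by (simp add: C_def)
  have "f (x @ (z # w) @ [g] @ y) = f ((x @ [Fg p]) @ w @ [g] @ y)" using z by simp
  also have "\<dots> = complex_of_real (q powr (- wF l g w)) * f ((x @ [Fg p]) @ [g] @ w @ y)"
    using Cons.IH[of "x @ [Fg p]"] Cons.prems by simp
  also have "f ((x @ [Fg p]) @ [g] @ w @ y) = f (x @ [Fg p, g] @ (w @ y))" by simp
  also have "\<dots> = complex_of_real (1 / C) * f (x @ [g, Fg p] @ (w @ y))"
    using R2_use[OF r g z(2,3), of x "w @ y"] C0 by (simp add: C_def)
  also have "f (x @ [g, Fg p] @ (w @ y)) = f (x @ [g] @ (z # w) @ y)" using z by simp
  finally show ?case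
    using q by (simp add: wF_def cF_def z C_def powr_minus powr_add powr_diff field_simps)
qed

lemma move_F:
  assumes r: "R2 q l f" and q: "0 < q" and p: "1 \<le> p" "p \<le> l"
  shows "list_all gl k \<Longrightarrow>
    f (x @ k @ [Fg p] @ y) = complex_of_real (q powr (\<Sum>g\<leftarrow>k. dexp l g p - dexp l g (p + 1))) * f (x @ [Fg p] @ k @ y)"
proof (induction k arbitrary: x)
  case Nil then show ?case using q by simp
next
  case (Cons g k)
  have "f (x @ (g # k) @ [Fg p] @ y) = f ((x @ [g]) @ k @ [Fg p] @ y)" by simp
  also have "\<dots> = complex_of_real (q powr (\<Sum>g\<leftarrow>k. dexp l g p - dexp l g (p + 1))) * f ((x @ [g]) @ [Fg p] @ k @ y)"
    using Cons.IH[of "x @ [g]"] Cons.prems by simp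
  also have "f ((x @ [g]) @ [Fg p] @ k @ y) = f (x @ [g, Fg p] @ (k @ y))" by simp
  also have "\<dots> = complex_of_real (q powr (dexp l g p - dexp l g (p + 1))) * f (x @ [Fg p, g] @ (k @ y))"
    using R2_use[OF r _ p, of g x "k @ y"] Cons.prems by simp
  also have "f (x @ [Fg p, g] @ (k @ y)) = f (x @ [Fg p] @ (g # k) @ y)" by simp
  moreover have "complex_of_real (q powr (\<Sum>g\<leftarrow>g # k. dexp l g p - dexp l g (p + 1)))
      = complex_of_real (q powr (\<Sum>g\<leftarrow>k. dexp l g p - dexp l g (p + 1))) * complex_of_real (q powr (dexp l g p - dexp l g (p + 1)))"
    by (simp only: sum_list.Cons list.map powr_add of_real_mult mult.commute)
  ultimately show ?case by (simp only: mult.assoc)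
qed

definition Z :: "real \<Rightarrow> nat \<Rightarrow> nat \<Rightarrow> uelem" where
  "Z q n j = Tm q (Mfrom q n j)"

lemma ract_Z0: "ract f (Z q 0 j) = (\<lambda>w. - complex_of_real q * f (Fg j # w))"
  unfolding Z_def by (simp add: Tm_E ract_single)

lemma ract_ZSuc:
  assumes q: "0 < q"
  shows "ract f (Z q (Suc n) j) = (\<lambda>w. - complex_of_real q * ract (wact f [Fg j]) (Z q n (Suc j)) w
                                       + wact (ract f (Z q n (Suc j))) [Fg j] w)"
proof
  fix w
  have "ract f (Z q (Suc n) j) w = ract (ract f (Tm q (ugen (Eg j)))) (Z q n (Suc j)) w
      + cnj (- inverse (complex_of_real q)) * ract (ract f (Z q n (Suc j))) (Tm q (ugen (Eg j))) w"
    unfolding Z_def by (simp add: qcomm_def Tm_append ract_append Tm_uscale Tm_umul)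
  also have "\<dots> = - complex_of_real q * ract (wact f [Fg j]) (Z q n (Suc j)) w
                  + wact (ract f (Z q n (Suc j))) [Fg j] w"
  proof -
    have "ract f (Tm q (ugen (Eg j))) = (\<lambda>w. - complex_of_real q * wact f [Fg j] w)"
      by (simp add: Tm_E ract_single wact_def)
    moreover have "ract (ract f (Z q n (Suc j))) (Tm q (ugen (Eg j))) w = - complex_of_real q * wact (ract f (Z q n (Suc j))) [Fg j] w"
      by (simp add: Tm_E ract_single wact_def)
    ultimately show ?thesis using q by (simp add: ract_nscale_fun)
  qed
  finally show "ract f (Z q (Suc n) j) w = - complex_of_real q * ract (wact f [Fg j]) (Z q n (Suc j)) w
                  + wact (ract f (Z q n (Suc j))) [Fg j] w" .
qed

definition wE :: "nat \<Rightarrow> gen \<Rightarrow> word \<Rightarrow> real" where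
  "wE l g u = (\<Sum>x\<leftarrow>u. (case x of Eg p \<Rightarrow> dexp l g p - dexp l g (p + 1) | _ \<Rightarrow> 0))"

lemma wE_zero: "(\<forall>x\<in>set u. \<exists>p. x = Eg p \<and> i + 2 \<le> p) \<Longrightarrow> wE l (Km i) u = 0"
  by (induction u) (auto simp: wE_def)

lemma Mfrom_inv:
  "1 \<le> j \<Longrightarrow> \<forall>(c, u)\<in>set (Mfrom q n j). (\<forall>x\<in>set u. \<exists>p. x = Eg p \<and> j \<le> p \<and> p \<le> j + n) \<and> wE l (Km (j - 1)) u = - 1 / 2"
proof (induction n arbitrary: j)
  case 0
  then have "j \<noteq> j - 1" "Suc j \<noteq> j - 1" "j - 1 + 1 = j" by arith+
  then show ?case by (auto simp: ugen_def wE_def)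
next
  case (Suc n)
  have IH: "\<forall>(c, u)\<in>set (Mfrom q n (Suc j)). (\<forall>x\<in>set u. \<exists>p. x = Eg p \<and> Suc j \<le> p \<and> p \<le> Suc j + n) \<and> wE l (Km j) u = - 1 / 2"
    using Suc.IH[of "Suc j"] by simp
  have z: "wE l (Km (j - 1)) v = 0" if "(c, v) \<in> set (Mfrom q n (Suc j))" for c v
    using IH that Suc.prems by (intro wE_zero) fastforce
  have "j \<noteq> j - 1" "Suc j \<noteq> j - 1" "j - 1 + 1 = j" using Suc.prems by arith+
  then have e: "wE l (Km (j - 1)) [Eg j] = - 1 / 2" by (simp add: wE_def)
  have app: "wE l g (u @ v) = wE l g u + wE l g v" for g u v by (simp add: wE_def)
  have "(\<forall>x\<in>set u. \<exists>p. x = Eg p \<and> j \<le> p \<and> p \<le> j + Suc n) \<and> wE l (Km (j - 1)) u = - 1 / 2"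
    if cu: "(c, u) \<in> set (Mfrom q (Suc n) j)" for c u
  proof -
    obtain d v where v: "(d, v) \<in> set (Mfrom q n (Suc j))" and uv: "u = Eg j # v \<or> u = v @ [Eg j]"
      using cu by (auto simp: qcomm_def umul_def uscale_def ugen_def)
    have "\<forall>x\<in>set v. \<exists>p. x = Eg p \<and> Suc j \<le> p \<and> p \<le> Suc j + n" using IH v by fastforce
    moreover have "wE l (Km (j - 1)) v = 0" using z v by blast
    ultimately show ?thesis using uv e app[of _ "[Eg j]" v] app[of _ v "[Eg j]"] by fastforce
  qed
  then show ?case by blast
qed

lemma Tm_map: "Tm q x = map (\<lambda>(c, u). (cnj c * fst (tau q u), snd (tau q u))) x"
  unfolding Tm_def usinv_def ustar_def tau_def by (simp add: case_prod_unfold o_def)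

fun eF :: "gen \<Rightarrow> gen" where
  "eF (Eg p) = Fg p" | "eF x = x"

lemma tau_E: "(\<forall>x\<in>set u. \<exists>p. x = Eg p) \<Longrightarrow> snd (tau q u) = map eF u"
proof (induction u)
  case Nil then show ?case by (simp add: tau_def)
next
  case (Cons x u)
  obtain p where x: "x = Eg p" using Cons.prems by auto
  have "tau q (x # u) = tau q ([x] @ u)" by simp
  then show ?case using Cons x by (simp only: tau_append) (simp add: tau_def)
qed

lemma Z_inv:
  assumes "1 \<le> j" "j + n \<le> l"
  shows "\<forall>(c, u)\<in>set (Z q n j). (\<forall>x\<in>set u. \<exists>p. x = Fg p \<and> 1 \<le> p \<and> p \<le> l) \<and> wF l (Km (j - 1)) u = - 1 / 2"
proof (intro ballI, clarify)
  fix c u assume "(c, u) \<in> set (Z q n j)"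
  then obtain d v where v: "(d, v) \<in> set (Mfrom q n j)" and u: "u = snd (tau q v)"
    unfolding Z_def Tm_map by auto
  have inv: "(\<forall>x\<in>set v. \<exists>p. x = Eg p \<and> j \<le> p \<and> p \<le> j + n) \<and> wE l (Km (j - 1)) v = - 1 / 2"
    using Mfrom_inv[OF assms(1), of q n l] v by blast
  then have u': "u = map eF v" using u tau_E by blast
  have w: "wF l g (map eF v) = wE l g v" if "\<forall>x\<in>set v. \<exists>p. x = Eg p" for g
    using that by (induction v) (auto simp: wF_def wE_def cF_def)
  show "(\<forall>x\<in>set u. \<exists>p. x = Fg p \<and> 1 \<le> p \<and> p \<le> l) \<and> wF l (Km (j - 1)) u = - 1 / 2"
  proof
    show "\<forall>x\<in>set u. \<exists>p. x = Fg p \<and> 1 \<le> p \<and> p \<le> l"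
      using inv assms u' by fastforce
    have "\<forall>x\<in>set v. \<exists>p. x = Eg p" using inv by blast
    then show "wF l (Km (j - 1)) u = - 1 / 2" using inv w u' by metis
  qed
qed

lemma conv_wact_F: "wact (conv f g) [Fg j] = (\<lambda>w. conv (wact f [Fg j]) (wact g [Kp j]) w + conv (wact f [Km j]) (wact g [Fg j]) w)"
  by (simp add: conv_wact)

lemma conv_zero_left: "conv (\<lambda>w. 0) g w = 0"
  unfolding conv_def by (simp add: case_prod_unfold)

lemma conv_add_right: "conv f (\<lambda>w. g w + h w) w = conv f g w + conv f h w"
  unfolding conv_def by (simp add: case_prod_unfold sum_list_addf algebra_simps)

lemma conv_add_left: "conv (\<lambda>w. g w + h w) f w = conv g f w + conv h f w"
  unfolding conv_def by (simp add: case_prod_unfold sum_list_addf algebra_simps)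

lemma wact_add_fun: "wact (\<lambda>w. f w + g w) u = (\<lambda>w. wact f u w + wact g u w)"
  unfolding wact_def by simp

lemma sum_list_map_cong: "(\<And>x. x \<in> set xs \<Longrightarrow> F x = G x) \<Longrightarrow> (\<Sum>x\<leftarrow>xs. F x) = (\<Sum>x\<leftarrow>xs. G x)"
  by (metis map_cong)

lemma K1:
  assumes q: "0 < q" and a: "a \<in> CP q l" and j: "1 \<le> j" "j < l" and n: "Suc j + n \<le> l"
  shows "wact (ract a (Z q n (Suc j))) [Km j] = (\<lambda>w. complex_of_real (q powr (1/2)) * ract a (Z q n (Suc j)) w)"
proof
  fix w
  have r2: "R2 q l a" using Aq_R2[OF q CP_Aq[OF a]] .
  have inv: "\<forall>(c, u)\<in>set (Z q n (Suc j)). (\<forall>x\<in>set u. \<exists>p. x = Fg p \<and> 1 \<le> p \<and> p \<le> l) \<and> wF l (Km j) u = - 1 / 2"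
    using Z_inv[of "Suc j" n l q] n by simp
  have "wact (ract a (Z q n (Suc j))) [Km j] w = (\<Sum>(c, u)\<leftarrow>Z q n (Suc j). c * a (u @ [Km j] @ w))"
    unfolding wact_def ract_def by simp
  also have "\<dots> = (\<Sum>(c, u)\<leftarrow>Z q n (Suc j). complex_of_real (q powr (1/2)) * (c * a (u @ w)))"
  proof (rule sum_list_map_cong, clarify)
    fix c u assume cu: "(c, u) \<in> set (Z q n (Suc j))"
    have "a ([] @ u @ [Km j] @ w) = complex_of_real (q powr (- wF l (Km j) u)) * a ([] @ [Km j] @ u @ w)"
      by (rule move_g[OF r2 q]) (use inv cu in auto)
    also have "\<dots> = complex_of_real (q powr (1/2)) * a (u @ w)"
      using inv cu CP_Km[OF a j(1), of "u @ w"] j by auto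
    finally show "c * a (u @ [Km j] @ w) = complex_of_real (q powr (1/2)) * (c * a (u @ w))" by simp
  qed
  also have "\<dots> = complex_of_real (q powr (1/2)) * ract a (Z q n (Suc j)) w"
    unfolding ract_def by (simp add: case_prod_unfold sum_list_const_mult)
  finally show "wact (ract a (Z q n (Suc j))) [Km j] w = complex_of_real (q powr (1/2)) * ract a (Z q n (Suc j)) w" .
qed

lemma sum_kappa0: "(\<forall>m\<in>set xs. j + 2 \<le> m) \<Longrightarrow> (\<Sum>g\<leftarrow>map Kp xs. dexp l g j - dexp l g (j + 1)) = 0"
  by (induction xs) auto

lemma K2:
  assumes q: "0 < q" and b: "b \<in> Aq q l" and j: "1 \<le> j" "j < l"
  shows "wact (wact b (map Kp [Suc j..<l+1])) [Fg j] = (\<lambda>w. complex_of_real (q powr (1/2)) * wact (wact b [Fg j]) (map Kp [Suc j..<l+1]) w)"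
proof
  fix w
  have r2: "R2 q l b" using Aq_R2[OF q b] .
  have s: "(\<Sum>g\<leftarrow>map Kp [Suc j..<l+1]. dexp l g j - dexp l g (j + 1)) = 1/2"
  proof -
    have "[Suc j..<l+1] = Suc j # [Suc (Suc j)..<l+1]" using j by (simp add: upt_conv_Cons)
    moreover have "(\<Sum>g\<leftarrow>map Kp [Suc (Suc j)..<l+1]. dexp l g j - dexp l g (j + 1)) = 0"
      by (rule sum_kappa0) auto
    ultimately show ?thesis by simp
  qed
  have "wact (wact b (map Kp [Suc j..<l+1])) [Fg j] w = b ([] @ map Kp [Suc j..<l+1] @ [Fg j] @ w)"
    by (simp add: wact_def)
  also have "\<dots> = complex_of_real (q powr (\<Sum>g\<leftarrow>map Kp [Suc j..<l+1]. dexp l g j - dexp l g (j + 1))) * b ([] @ [Fg j] @ map Kp [Suc j..<l+1] @ w)"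
    by (rule move_F[OF r2 q j(1)]) (use j in \<open>auto simp: list_all_iff\<close>)
  also have "\<dots> = complex_of_real (q powr (1/2)) * wact (wact b [Fg j]) (map Kp [Suc j..<l+1]) w"
    unfolding s wact_def by (simp del: upt_Suc)
  finally show "wact (wact b (map Kp [Suc j..<l+1])) [Fg j] w = complex_of_real (q powr (1/2)) * wact (wact b [Fg j]) (map Kp [Suc j..<l+1]) w" .
qed

lemma K3:
  assumes q: "0 < q" and b: "b \<in> Aq q l" and that: "list_all gl k"
  shows "wact (wact b k) [Kp j] = wact b (Kp j # k)"
proof
  fix w
  have "b ([] @ (k @ [Kp j]) @ w) = b ([] @ (Kp j # k) @ w)"
    by (rule R1_use[OF Aq_R1[OF q b]]) (use that in \<open>auto simp: add.commute\<close>)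
  then show "wact (wact b k) [Kp j] w = wact b (Kp j # k) w" by (simp add: wact_def)
qed

lemma conv_nscale_right: "conv f (\<lambda>w. - (c * g w)) w = - (c * conv f g w)"
  using conv_scale_right[of f "- c" g w] by simp

lemma conv_nscale_left: "conv (\<lambda>w. - (c * f w)) g w = - (c * conv f g w)"
  using conv_scale_left[of "- c" f g w] by simp

lemma wact_single: "wact f [x] = (\<lambda>w. f (x # w))"
  unfolding wact_def by simp

lemma main_Z:
  assumes q: "0 < q" and l: "1 \<le> l"
  shows "1 \<le> j \<Longrightarrow> j + n = l \<Longrightarrow> a \<in> CP q l \<Longrightarrow> b \<in> Aq q l \<Longrightarrow>
    ract (conv a b) (Z q n j) = (\<lambda>w. conv a (ract b (Z q n j)) w + conv (ract a (Z q n j)) (wact b (map Kp [j..<l+1])) w)"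
proof (induction n arbitrary: j b)
  case 0
  then have jl: "j = l" by simp
  have aKm: "wact a [Km l] = a" using CP_Kml[OF q l 0(3)] by (simp add: wact_def)
  show ?case
  proof
    fix w
    have "conv a b (Fg l # w) = wact (conv a b) [Fg l] w" by (simp add: wact_def)
    also have "\<dots> = conv (wact a [Fg l]) (wact b [Kp l]) w + conv a (wact b [Fg l]) w"
      by (simp only: conv_wact_F aKm)
    finally have c: "conv a b (Fg l # w) = conv (wact a [Fg l]) (wact b [Kp l]) w + conv a (wact b [Fg l]) w" .
    show "ract (conv a b) (Z q 0 j) w = conv a (ract b (Z q 0 j)) w + conv (ract a (Z q 0 j)) (wact b (map Kp [j..<l+1])) w"
      unfolding ract_Z0 jl using c by (simp add: conv_nscale_right conv_nscale_left wact_single algebra_simps)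
  qed
next
  case (Suc n)
  have j: "1 \<le> j" "j < l" "Suc j + n = l" using Suc.prems by auto
  have a: "a \<in> CP q l" and b: "b \<in> Aq q l" using Suc.prems by auto
  define Zp where "Zp = Z q n (Suc j)"
  define kp where "kp = map Kp [Suc j..<l+1]"
  define b' where "b' = wact b [Fg j]"
  have b': "b' \<in> Aq q l" unfolding b'_def using Aq_wact[OF b] .
  have k: "map Kp [j..<l+1] = Kp j # kp" unfolding kp_def using j by (simp add: upt_conv_Cons)
  have aF: "wact a [Fg j] = (\<lambda>w. 0)" using CP_Fg[OF q a j(1)] j by (simp add: wact_def)
  have aK: "wact a [Km j] = a" using CP_Km[OF a j(1)] j by (simp add: wact_def)
  have IHb: "ract (conv a b) Zp = (\<lambda>w. conv a (ract b Zp) w + conv (ract a Zp) (wact b kp) w)"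
    using Suc.IH[of "Suc j" b] j a b unfolding Zp_def kp_def by simp
  have IHb': "ract (conv a b') Zp = (\<lambda>w. conv a (ract b' Zp) w + conv (ract a Zp) (wact b' kp) w)"
    using Suc.IH[of "Suc j" b'] j a b' unfolding Zp_def kp_def by simp
  have cF: "wact (conv a g) [Fg j] = conv a (wact g [Fg j])" for g
  proof
    fix w show "wact (conv a g) [Fg j] w = conv a (wact g [Fg j]) w"
      by (simp only: conv_wact_F aF aK conv_zero_left add_0)
  qed
  have k1: "wact (ract a Zp) [Km j] = (\<lambda>w. complex_of_real (q powr (1/2)) * ract a Zp w)"
    unfolding Zp_def using K1[OF q a j(1,2)] j by simp
  have k2: "wact (wact b kp) [Fg j] = (\<lambda>w. complex_of_real (q powr (1/2)) * wact b' kp w)"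
    unfolding kp_def b'_def using K2[OF q b j(1,2)] .
  have k3: "wact (wact b kp) [Kp j] = wact b (Kp j # kp)"
    unfolding kp_def using K3[OF q b] by (simp add: list_all_iff)
  have ss: "complex_of_real (q powr (1/2)) * complex_of_real (q powr (1/2)) = complex_of_real q"
    using q by (simp flip: of_real_mult powr_add)
  have ZSa: "ract a (Z q (Suc n) j) = wact (ract a Zp) [Fg j]"
    unfolding ract_ZSuc[OF q] Zp_def aF ract_zero_fun by simp
  have ZSb: "ract b (Z q (Suc n) j) = (\<lambda>w. - complex_of_real q * ract b' Zp w + wact (ract b Zp) [Fg j] w)"
    unfolding ract_ZSuc[OF q] Zp_def b'_def ..
  show ?case
  proof
    fix w
    have e1: "ract (conv a b) (Z q (Suc n) j) w = - complex_of_real q * ract (conv a b') Zp w + wact (ract (conv a b) Zp) [Fg j] w"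
      unfolding ract_ZSuc[OF q] Zp_def b'_def cF ..
    have e3: "wact (ract (conv a b) Zp) [Fg j] w = conv a (wact (ract b Zp) [Fg j]) w
        + conv (wact (ract a Zp) [Fg j]) (wact b (Kp j # kp)) w + complex_of_real q * conv (ract a Zp) (wact b' kp) w"
    proof -
      have "wact (ract (conv a b) Zp) [Fg j] w = wact (conv a (ract b Zp)) [Fg j] w + wact (conv (ract a Zp) (wact b kp)) [Fg j] w"
        unfolding IHb by (simp add: wact_def)
      also have "wact (conv (ract a Zp) (wact b kp)) [Fg j] w = conv (wact (ract a Zp) [Fg j]) (wact b (Kp j # kp)) w
          + conv (\<lambda>w. complex_of_real (q powr (1/2)) * ract a Zp w) (\<lambda>w. complex_of_real (q powr (1/2)) * wact b' kp w) w"
        by (simp only: conv_wact_F k1 k2 k3)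
      also have "conv (\<lambda>w. complex_of_real (q powr (1/2)) * ract a Zp w) (\<lambda>w. complex_of_real (q powr (1/2)) * wact b' kp w) w
          = complex_of_real q * conv (ract a Zp) (wact b' kp) w"
        by (simp only: conv_scale_left conv_scale_right mult.assoc[symmetric] ss)
      finally show ?thesis by (simp only: cF add.assoc)
    qed
    have e6: "conv a (\<lambda>w. - complex_of_real q * ract b' Zp w + wact (ract b Zp) [Fg j] w) w
        = - complex_of_real q * conv a (ract b' Zp) w + conv a (wact (ract b Zp) [Fg j]) w"
      by (simp only: conv_add_right conv_scale_right)
    show "ract (conv a b) (Z q (Suc n) j) w = conv a (ract b (Z q (Suc n) j)) w + conv (ract a (Z q (Suc n) j)) (wact b (map Kp [j..<l+1])) w"
      unfolding e1 e3 IHb' ZSa ZSb e6 k by (simp add: algebra_simps)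
  qed
qed

lemma ract_usinv: "ract f (usinv q x) = (\<lambda>w. \<Sum>(c, u)\<leftarrow>x. c * fst (sinv_word q u) * f (snd (sinv_word q u) @ w))"
  unfolding ract_def usinv_def by (simp add: case_prod_unfold o_def)

lemma usinv_umul: "ract f (usinv q (umul x y)) = ract (ract f (usinv q y)) (usinv q x)"
proof
  fix w
  have "ract f (usinv q (umul x y)) w = (\<Sum>(c, u)\<leftarrow>x. \<Sum>(d, v)\<leftarrow>y. c * d * fst (sinv_word q (u @ v)) * f (snd (sinv_word q (u @ v)) @ w))"
    unfolding ract_usinv by (simp add: sum_umul)
  also have "\<dots> = ract (ract f (usinv q y)) (usinv q x) w"
    unfolding ract_usinv by (simp add: sinv_word_append case_prod_unfold mult_ac flip: sum_list_const_mult)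
  finally show "ract f (usinv q (umul x y)) w = ract (ract f (usinv q y)) (usinv q x) w" .
qed

lemma sinv_Kps: "sinv_word q (map Kp xs) = (1, rev (map Km xs))"
  by (induction xs) (auto simp: Let_def)

definition Gw :: "nat \<Rightarrow> nat \<Rightarrow> word" where
  "Gw l x = Kh # rev (map Km [x..<l+1]) @ [Khm]"

lemma ract_Y: "ract f (usinv q (umul (ugen Kh) (Xop q l x))) = wact (ract f (Z q (l - x) x)) (Gw l x)"
proof -
  have s: "sinv_word q (map Kp [x..<Suc l] @ [Khm]) = (1, Kh # rev (map Km [x..<Suc l]))"
    by (simp add: sinv_word_append sinv_Kps del: upt_Suc)
  show ?thesis
    unfolding Xop_def usinv_umul Z_def Tm_def Mil_def
    by (simp add: Nop_def ugen_def usinv_def s ract_single wact_def Gw_def del: upt_Suc)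
qed

lemma wexp_Kps: "wexp l (map Kp xs) j + wexp l (rev (map Km xs)) j = 0"
proof -
  have "wexp l (rev (map Km xs)) j = wexp l (map Km xs) j" by (simp add: wexp_def rev_map[symmetric] sum_list_rev)
  moreover have "wexp l (map Kp xs) j + wexp l (map Km xs) j = 0" by (induction xs) auto
  ultimately show ?thesis by simp
qed

lemma Y_lemma:
  assumes q: "0 < q" and l: "1 \<le> l" and x: "1 \<le> x" "x \<le> l" and a: "a \<in> CP q l" and b: "b \<in> Aq q l"
  shows "ract (conv a b) (usinv q (umul (ugen Kh) (Xop q l x)))
       = (\<lambda>w. conv a (ract b (usinv q (umul (ugen Kh) (Xop q l x)))) w + conv (ract a (usinv q (umul (ugen Kh) (Xop q l x)))) b w)"
proof -
  define Zx where "Zx = Z q (l - x) x"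
  define G where "G = Gw l x"
  define k where "k = map Kp [x..<l+1]"
  have glKm: "list_all gl (map Km xs)" for xs by (induction xs) auto
  have "list_all gl (Gw l x)" unfolding Gw_def by (simp only: list_all_append list.pred_inject list_all_rev glKm gl.simps simp_thms)
  then have glG: "list_all gl G" unfolding G_def .
  have M: "ract (conv a b) Zx = (\<lambda>w. conv a (ract b Zx) w + conv (ract a Zx) (wact b k) w)"
    unfolding Zx_def k_def using main_Z[OF q l x(1), of "l - x" a b] x a b by simp
  have cG: "wact (conv f g) G = conv (wact f G) (wact g G)" for f g
    by (rule ext) (simp add: conv_wact coprod_gl[OF glG])
  have aG: "wact a G = a"
  proof
    fix w
    have "\<forall>g\<in>set G. \<forall>w. a (g # w) = a w"
    proof (intro ballI allI)
      fix g w assume "g \<in> set G"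
      then have "g = Kh \<or> g = Khm \<or> (\<exists>m. g = Km m \<and> x \<le> m \<and> m \<le> l)"
        unfolding G_def Gw_def by (simp only: set_simps set_append set_rev set_map set_upt) auto
      then show "a (g # w) = a w"
      proof (elim disjE exE conjE)
        fix m assume m: "g = Km m" "x \<le> m" "m \<le> l"
        show "a (g # w) = a w"
        proof (cases "m = l")
          case True then show ?thesis using CP_Kml[OF q l a] m by simp
        next
          case False then show ?thesis using CP_Km[OF a] m x by simp
        qed
      qed (use CP_Kh[OF a] CP_Khm[OF a] in auto)
    qed
    then show "wact a G w = a w" unfolding wact_def by (rule letters_inv)
  qed
  have bG: "wact (wact b k) G = b"
  proof
    fix w
    have "b ([] @ (k @ G) @ w) = b ([] @ [] @ w)"
    proof (rule R1_use[OF Aq_R1[OF q b]])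
      have glKp: "list_all gl (map Kp xs)" for xs by (induction xs) auto
      show "list_all gl (k @ G)" using glG glKp unfolding k_def list_all_append by blast
      show "list_all gl []" by simp
      show "\<forall>j\<in>{1..l + 1}. wexp l (k @ G) j = wexp l [] j"
        unfolding k_def G_def Gw_def using wexp_Kps[of l "[x..<l+1]"] by simp
    qed
    then show "wact (wact b k) G w = b w" by (simp add: wact_def)
  qed
  have Yf: "ract f (usinv q (umul (ugen Kh) (Xop q l x))) = wact (ract f Zx) G" for f
    unfolding ract_Y Zx_def G_def ..
  show ?thesis
  proof
    fix w
    have "ract (conv a b) (usinv q (umul (ugen Kh) (Xop q l x))) w
        = wact (conv a (ract b Zx)) G w + wact (conv (ract a Zx) (wact b k)) G w"
      unfolding Yf M by (simp add: wact_def)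
    also have "\<dots> = conv a (wact (ract b Zx) G) w + conv (wact (ract a Zx) G) b w"
      by (simp only: cG aG bG)
    finally show "ract (conv a b) (usinv q (umul (ugen Kh) (Xop q l x))) w
       = conv a (ract b (usinv q (umul (ugen Kh) (Xop q l x)))) w + conv (ract a (usinv q (umul (ugen Kh) (Xop q l x)))) b w"
      unfolding Yf .
  qed
qed

theorem lemma5p7:
  fixes q :: real and l k :: nat and N :: int
    and a :: functional and \<omega> :: "nat set \<Rightarrow> functional"
  assumes "0 < q" and "q < 1" and "2 \<le> l" and "k \<le> l"
    and "a \<in> CP q l" and "\<omega> \<in> Omega q l N k"
  shows "\<forall>I \<in> Lam l (k + 1).
           dbar q l (\<lambda>J. conv a (\<omega> J)) I
         = (\<lambda>w. conv a (dbar q l \<omega> I) w + qwedge q (dbar0 q l a) \<omega> I w)"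
proof (intro ballI)
  fix I assume I: "I \<in> Lam l (k + 1)"
  have q: "0 < q" and l: "1 \<le> l" and a: "a \<in> CP q l" using assms by auto
  have sub: "I \<subseteq> {1..l}" and card: "card I = k + 1" using I unfolding Lam_def by auto
  have fin: "finite I" using card by (metis card_ge_0_finite zero_less_Suc Suc_eq_plus1)
  define Y where "Y x = usinv q (umul (ugen Kh) (Xop q l x))" for x
  have bA: "\<omega> (I - {x}) \<in> Aq q l" if x: "x \<in> I" for x
  proof -
    have "I - {x} \<in> Lam l k" using sub card fin x unfolding Lam_def by auto
    then show ?thesis using assms(6) unfolding Omega_def by blast
  qed
  have per: "ract (conv a (\<omega> (I - {x}))) (Y x) w = conv a (ract (\<omega> (I - {x})) (Y x)) w + conv (ract a (Y x)) (\<omega> (I - {x})) w"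
    if x: "x \<in> I" for x w
  proof -
    have "1 \<le> x" "x \<le> l" using x sub by auto
    from Y_lemma[OF q l this a bA[OF x]] show ?thesis unfolding Y_def by (rule fun_cong)
  qed
  show "dbar q l (\<lambda>J. conv a (\<omega> J)) I = (\<lambda>w. conv a (dbar q l \<omega> I) w + qwedge q (dbar0 q l a) \<omega> I w)"
  proof
    fix w
    have "dbar q l (\<lambda>J. conv a (\<omega> J)) I w = (\<Sum>x\<in>I. qsign q I x * ract (conv a (\<omega> (I - {x}))) (Y x) w)"
      unfolding dbar_def Y_def by simp
    also have "\<dots> = (\<Sum>x\<in>I. qsign q I x * conv a (ract (\<omega> (I - {x})) (Y x)) w + qsign q I x * conv (ract a (Y x)) (\<omega> (I - {x})) w)"
      by (rule sum.cong) (simp_all add: per distrib_left)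
    also have "\<dots> = (\<Sum>x\<in>I. qsign q I x * conv a (ract (\<omega> (I - {x})) (Y x)) w) + (\<Sum>x\<in>I. qsign q I x * conv (ract a (Y x)) (\<omega> (I - {x})) w)"
      by (simp add: sum.distrib)
    also have "(\<Sum>x\<in>I. qsign q I x * conv a (ract (\<omega> (I - {x})) (Y x)) w) = conv a (dbar q l \<omega> I) w"
      unfolding dbar_def Y_def by (simp only: conv_sum_right conv_scale_right)
    also have "(\<Sum>x\<in>I. qsign q I x * conv (ract a (Y x)) (\<omega> (I - {x})) w) = qwedge q (dbar0 q l a) \<omega> I w"
      unfolding qwedge_def dbar0_def Y_def by simp
    finally show "dbar q l (\<lambda>J. conv a (\<omega> J)) I w = conv a (dbar q l \<omega> I) w + qwedge q (dbar0 q l a) \<omega> I w" .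
  qed
qed

end
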